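(* Let $r,k\in\mathbb Z$ with $0\le k\le r$ and suppose Assumptions (A1), (A2), (A3) hold. Then for $1\le n\le N$, $0\le l\le r$ and all $v\in C^{k_{\mathcal J}+1}(\overline I_n,\mathbb R^d)$, $$\sup_{t\in I_n}\|(\mathcal J_nv)^{(l)}(t)\|\le C\sum_{j=0}^{k_{\mathcal J}+1}\big(\tfrac{\tau_n}{2}\big)^{j-l}\sup_{t\in I_n}\|v^{(j)}(t)\|$$ with $C$ independent of $\tau_n$, $n$ and $v$.
   Context: Mesh $t_0<\dots<t_N$, $I_n=(t_{n-1},t_n]$, $\tau_n=t_n-t_{n-1}\le1$; one-sided limits $v(t_n^\pm)$. $T_n(\hat t)=\frac{t_n+t_{n-1}}{2}+\frac{\tau_n}{2}\hat t$. $\|\cdot\|$, $(\cdot,\cdot)$ Euclidean norm/inner product on $\mathbb R^d$; $P_s$ polynomials of degree $\le s$; $\delta_{i,j}$ Kronecker symbol. Operators: $\widehat{\mathscr I}$ linear functional, $\widehat{\mathcal I}$ linear operator; $k_{\mathscr I},k_{\mathcal I}\ge0$ smallest integers such that they are well defined on $C^{k_{\mathscr I}}([-1,1])$ resp. $C^{k_{\mathcal I}}([-1,1])$; $\widehat{\mathcal I}\hat v\in C^l$ whenever $\hat v\in C^{\max\{k_{\mathcal I},l\}}$. Local: $\mathscr I_n[\varphi]=\frac{\tau_n}{2}\widehat{\mathscr I}[\varphi\circ T_n]$, $\mathcal I_n\psi=(\widehat{\mathcal I}(\psi\circ T_n))\circ T_n^{-1}$, componentwise. $k_{\mathcal J}:=\max\{\lfloor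 k/2\rfloor-1,k_{\mathscr I},k_{\mathcal I}\}$. $\mathcal J_n v\in P_r(I_n,\mathbb R^d)$ for $v\in C^{k_{\mathcal J}+1}(\overline I_n,\mathbb R^d)$ is defined by: if $k\ge1$, $(\mathcal J_nv)^{(i)}(t_{n-1}^+)=v^{(i)}(t_{n-1}^+)$, $i=0,\dots,\lfloor (k-1)/2\rfloor$; if $k\ge2$, $(\mathcal J_nv)^{(i)}(t_n^-)=v^{(i)}(t_n^-)$, $i=1,\dots,\lfloor k/2\rfloor$; and $\mathscr I_n[((\mathcal J_nv)',\varphi)]+\delta_{0,k}(\mathcal J_nv(t_{n-1}^+),\varphi(t_{n-1}^+))=\mathscr I_n[(\mathcal I_n(v'),\varphi)]+\delta_{0,k}(v(t_{n-1}^+),\varphi(t_{n-1}^+))$ for all $\varphi\in P_{r-k}(I_n,\mathbb R^d)$ (well defined under (A1)). (A1): whenever $\hat\psi\in P_{r-\max\{1,k\}}([-1,1])$ satisfies $\widehat{\mathscr I}[(1-\hat t)^{\lfloor k/2\rfloor}(1+\hat t)^{|\lfloor (k-1)/2\rfloor|}\hat\psi\hat\varphi]=0$ for all $\hat\varphi\in P_{r-\max\{1,k\}}([-1,1])$, then $\hat\psi\equiv0$. (A2): $\|\widehat{\mathscr I}[\hat\varphi]\|\le\mathfrak C_0\sum_{j=0}^{k_{\mathscr I}}\sup_{[-1,1]}\|\hat\varphi^{(j)}\|$ for all $\hat\varphi\in C^{k_{\mathscr I}}([-1,1],\mathbb R^d)$. (A3): for $0\le l\le k_{\mathscr I}$,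 $\sup_{[-1,1]}\|(\widehat{\mathcal I}\hat\varphi)^{(l)}\|\le\mathfrak C_1\sum_{j=0}^{\max\{k_{\mathcal I},l\}}\sup_{[-1,1]}\|\hat\varphi^{(j)}\|$ for all $\hat\varphi\in C^{\max\{k_{\mathcal I},l\}}([-1,1],\mathbb R^d)$. *)

theory Defs
  imports "HOL-Analysis.Analysis" "HOL-Computational_Algebra.Polynomial"
begin

fun nderiv :: "real set \<Rightarrow> nat \<Rightarrow> (real \<Rightarrow> 'a::real_normed_vector) \<Rightarrow> real \<Rightarrow> 'a" where
  "nderiv S 0 f = f"
| "nderiv S (Suc j) f = (\<lambda>x. vector_derivative (nderiv S j f) (at x within S))"

definition Ck_on :: "nat \<Rightarrow> real set \<Rightarrow> (real \<Rightarrow> 'a::real_normed_vector) \<Rightarrow> bool" where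
  "Ck_on k S f \<longleftrightarrow>
     (\<forall>j<k. \<forall>x\<in>S. (nderiv S j f has_vector_derivative nderiv S (Suc j) f x) (at x within S))
   \<and> (\<forall>j\<le>k. continuous_on S (nderiv S j f))"

definition supn :: "real set \<Rightarrow> (real \<Rightarrow> 'a::real_normed_vector) \<Rightarrow> real" where
  "supn S f = (SUP x\<in>S. norm (f x))"

text \<open>Scalar polynomials of degree \<le> m (m may be negative, then only 0).\<close>
definition Pdeg :: "int \<Rightarrow> real poly set" where
  "Pdeg m = {p. p = 0 \<or> int (degree p) \<le> m}"

definition vpolys :: "nat \<Rightarrow> (real \<Rightarrow> 'a::real_vector) set" where
  "vpolys s = {f. \<exists>c. \<forall>x. f x = (\<Sum>i\<le>s. (x ^ i) *\<^sub>R c i)}"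

definition Tmap :: "real \<Rightarrow> real \<Rightarrow> real \<Rightarrow> real" where
  "Tmap a b s = (a + b) / 2 + (b - a) / 2 * s"

definition Tinv :: "real \<Rightarrow> real \<Rightarrow> real \<Rightarrow> real" where
  "Tinv a b x = (2 * x - a - b) / (b - a)"

definition vecJ :: "((real \<Rightarrow> real) \<Rightarrow> real) \<Rightarrow> (real \<Rightarrow> 'a::euclidean_space) \<Rightarrow> 'a" where
  "vecJ Jh f = (\<Sum>u\<in>Basis. Jh (\<lambda>s. f s \<bullet> u) *\<^sub>R u)"

definition vecI :: "((real \<Rightarrow> real) \<Rightarrow> real \<Rightarrow> real) \<Rightarrow> (real \<Rightarrow> 'a::euclidean_space) \<Rightarrow> real \<Rightarrow> 'a" where
  "vecI Ih f = (\<lambda>s. \<Sum>u\<in>Basis. Ih (\<lambda>x. f x \<bullet> u) s *\<^sub>R u)"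

definition locJ :: "((real \<Rightarrow> real) \<Rightarrow> real) \<Rightarrow> real \<Rightarrow> real \<Rightarrow> (real \<Rightarrow> real) \<Rightarrow> real" where
  "locJ Jh a b g = (b - a) / 2 * Jh (g \<circ> Tmap a b)"

definition locI :: "((real \<Rightarrow> real) \<Rightarrow> real \<Rightarrow> real) \<Rightarrow> real \<Rightarrow> real \<Rightarrow> (real \<Rightarrow> 'a::euclidean_space) \<Rightarrow> real \<Rightarrow> 'a" where
  "locI Ih a b \<psi> = vecI Ih (\<psi> \<circ> Tmap a b) \<circ> Tinv a b"

definition Jn_cond :: "nat \<Rightarrow> nat \<Rightarrow> ((real \<Rightarrow> real) \<Rightarrow> real) \<Rightarrow> ((real \<Rightarrow> real) \<Rightarrow> real \<Rightarrow> real)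
    \<Rightarrow> real \<Rightarrow> real \<Rightarrow> (real \<Rightarrow> 'a::euclidean_space) \<Rightarrow> (real \<Rightarrow> 'a) \<Rightarrow> bool" where
  "Jn_cond r k Jh Ih a b v p \<longleftrightarrow>
     p \<in> vpolys r
   \<and> (1 \<le> k \<longrightarrow> (\<forall>i \<le> (k - 1) div 2. nderiv {a..b} i p a = nderiv {a..b} i v a))
   \<and> (2 \<le> k \<longrightarrow> (\<forall>i\<in>{1..k div 2}. nderiv {a..b} i p b = nderiv {a..b} i v b))
   \<and> (\<forall>\<phi>\<in>vpolys (r - k).
        locJ Jh a b (\<lambda>x. nderiv {a..b} 1 p x \<bullet> \<phi> x) + (if k = 0 then p a \<bullet> \<phi> a else 0)
      = locJ Jh a b (\<lambda>x. locI Ih a b (nderiv {a..b} 1 v) x \<bullet> \<phi> x) + (if k = 0 then v a \<bullet> \<phi> a else 0))"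

definition Jn :: "nat \<Rightarrow> nat \<Rightarrow> ((real \<Rightarrow> real) \<Rightarrow> real) \<Rightarrow> ((real \<Rightarrow> real) \<Rightarrow> real \<Rightarrow> real)
    \<Rightarrow> real \<Rightarrow> real \<Rightarrow> (real \<Rightarrow> 'a::euclidean_space) \<Rightarrow> (real \<Rightarrow> 'a)" where
  "Jn r k Jh Ih a b v = (THE p. Jn_cond r k Jh Ih a b v p)"

definition A1 :: "nat \<Rightarrow> nat \<Rightarrow> ((real \<Rightarrow> real) \<Rightarrow> real) \<Rightarrow> bool" where
  "A1 r k Jh \<longleftrightarrow>
    (\<forall>\<psi>\<in>Pdeg (int r - max 1 (int k)).
       (\<forall>\<phi>\<in>Pdeg (int r - max 1 (int k)).
          Jh (\<lambda>s. (1 - s) ^ (k div 2) * (1 + s) ^ nat \<bar>(int k - 1) div 2\<bar> * poly \<psi> s * poly \<phi> s) = 0)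
       \<longrightarrow> \<psi> = 0)"

end

theory Submission
  imports Defs "Jordan_Normal_Form.Determinant" "HOL-Computational_Algebra.Polynomial_Factorial" "HOL-Computational_Algebra.Field_as_Ring"
begin

lemma sq_inv:
  fixes A :: "nat \<Rightarrow> nat \<Rightarrow> real"
  assumes ker: "\<And>x. (\<forall>i<n. (\<Sum>j<n. A i j * x j) = 0) \<Longrightarrow> (\<forall>j<n. x j = 0)"
  shows "\<exists>B. (\<forall>y i. i<n \<longrightarrow> (\<Sum>j<n. A i j * (\<Sum>l<n. B j l * y l)) = y i)
           \<and> (\<forall>y x. (\<forall>i<n. (\<Sum>j<n. A i j * x j) = y i) \<longrightarrow> (\<forall>j<n. x j = (\<Sum>l<n. B j l * y l)))"
proof -
  define M where "M = mat n n (\<lambda>(i,j). A i j)"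
  have M: "M \<in> carrier_mat n n" unfolding M_def by simp
  have mv: "\<And>w. w \<in> carrier_vec n \<Longrightarrow> i < n \<Longrightarrow> (M *\<^sub>v w) $ i = (\<Sum>j<n. A i j * w $ j)" for i
    unfolding M_def by (simp add: mult_mat_vec_def scalar_prod_def lessThan_atLeast0 row_def)
  have "Determinant.det M \<noteq> 0"
  proof
    assume "Determinant.det M = 0"
    then obtain v where v: "v \<in> carrier_vec n" "v \<noteq> 0\<^sub>v n" "M *\<^sub>v v = 0\<^sub>v n"
      using det_0_iff_vec_prod_zero_field[OF M] by auto
    have "\<forall>i<n. (\<Sum>j<n. A i j * v $ j) = 0"
    proof (intro allI impI)
      fix i assume "i < n"
      then have "(M *\<^sub>v v) $ i = 0" using v(3) by simp
      then show "(\<Sum>j<n. A i j * v $ j) = 0" using mv[OF v(1) \<open>i<n\<close>] by simp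
    qed
    then have "\<forall>j<n. v $ j = 0" using ker[of "\<lambda>j. v $ j"] by simp
    then have "v = 0\<^sub>v n" using v(1) by (intro eq_vecI) auto
    then show False using v(2) by simp
  qed
  then have "M \<in> Units (ring_mat TYPE(real) n ())" by (rule det_non_zero_imp_unit[OF M])
  then obtain N where N: "N \<in> carrier_mat n n" "N * M = 1\<^sub>m n" "M * N = 1\<^sub>m n"
    unfolding Units_def by (auto simp: ring_mat_def)
  define B where "B = (\<lambda>j l. N $$ (j,l))"
  have nv: "\<And>w. w \<in> carrier_vec n \<Longrightarrow> j < n \<Longrightarrow> (N *\<^sub>v w) $ j = (\<Sum>l<n. B j l * w $ l)" for j
    using N(1) unfolding B_def by (simp add: mult_mat_vec_def scalar_prod_def lessThan_atLeast0 row_def)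
  show ?thesis
  proof (intro exI conjI allI impI)
    fix y :: "nat \<Rightarrow> real" and i assume i: "i < n"
    define w where "w = vec n y"
    have w: "w \<in> carrier_vec n" unfolding w_def by simp
    have "(M *\<^sub>v (N *\<^sub>v w)) = w" using N M w by (metis assoc_mult_mat_vec one_mult_mat_vec)
    then have "(M *\<^sub>v (N *\<^sub>v w)) $ i = y i" using i by (simp add: w_def)
    moreover have "(M *\<^sub>v (N *\<^sub>v w)) $ i = (\<Sum>j<n. A i j * (\<Sum>l<n. B j l * y l))"
      using mv[of "N *\<^sub>v w" i] i N(1) nv[OF w] by (simp add: w_def)
    ultimately show "(\<Sum>j<n. A i j * (\<Sum>l<n. B j l * y l)) = y i" by simp
  next
    fix y x :: "nat \<Rightarrow> real" and j assume h: "\<forall>i<n. (\<Sum>j<n. A i j * x j) = y i" and j: "j < n"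
    define w where "w = vec n x"
    have w: "w \<in> carrier_vec n" unfolding w_def by simp
    have Mw: "M *\<^sub>v w = vec n y"
      by (rule eq_vecI) (use M h mv[OF w] in \<open>auto simp: w_def\<close>)
    have "N *\<^sub>v (M *\<^sub>v w) = w" using N M w by (metis assoc_mult_mat_vec one_mult_mat_vec)
    then have "(N *\<^sub>v vec n y) $ j = x j" using j Mw by (simp add: w_def)
    then show "x j = (\<Sum>l<n. B j l * y l)" using nv[of "vec n y" j] j by simp
  qed
qed

lemma pderiv_iter_linmul:
  "(pderiv ^^ Suc i) ([:-x,1:] * q) = Polynomial.smult (of_nat (Suc i)) ((pderiv ^^ i) q) + [:-x,1:] * (pderiv ^^ Suc i) q"
proof (induction i)
  case 0
  have "(pderiv ^^ Suc 0) ([:-x,1:] * q) = pderiv ([:-x,1:] * q)" by simp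
  also have "\<dots> = [:-x,1:] * pderiv q + q * pderiv [:-x,1:]" by (rule pderiv_mult)
  also have "\<dots> = Polynomial.smult (of_nat (Suc 0)) ((pderiv ^^ 0) q) + [:-x,1:] * (pderiv ^^ Suc 0) q"
    by (simp add: pderiv_pCons algebra_simps)
  finally show ?case .
next
  case (Suc i)
  have "(pderiv ^^ Suc (Suc i)) ([:-x,1:] * q) = pderiv ((pderiv ^^ Suc i) ([:-x,1:] * q))" by simp
  also have "\<dots> = Polynomial.smult (of_nat (Suc (Suc i))) ((pderiv ^^ Suc i) q) + [:-x,1:] * (pderiv ^^ Suc (Suc i)) q"
    unfolding Suc by (simp add: pderiv_add pderiv_smult pderiv_mult pderiv_pCons algebra_simps of_nat_Suc smult_add_left)
  finally show ?case .
qed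

lemma deriv_zero_dvd:
  fixes p :: "real poly"
  shows "(\<forall>i<m. poly ((pderiv ^^ i) p) x = 0) \<Longrightarrow> [:-x,1:]^m dvd p"
proof (induction m arbitrary: p)
  case 0
  then show ?case by simp
next
  case (Suc m)
  have "poly p x = 0" using Suc.prems[rule_format, of 0] by simp
  then obtain q where q: "p = [:-x,1:] * q" using poly_eq_0_iff_dvd by (metis dvdE)
  have "\<forall>i<m. poly ((pderiv ^^ i) q) x = 0"
  proof (intro allI impI)
    fix i assume "i < m"
    then have "poly ((pderiv ^^ Suc i) p) x = 0" using Suc.prems[rule_format, of "Suc i"] by simp
    then show "poly ((pderiv ^^ i) q) x = 0" unfolding q pderiv_iter_linmul by simp
  qed
  then have "[:-x,1:]^m dvd q" using Suc.IH by blast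
  then show ?case unfolding q power_Suc by (rule mult_dvd_mono[OF dvd_refl])
qed

lemma coprime_lin: "coprime ([:1,1:] :: real poly) [:-1,1:]"
proof (rule coprimeI)
  fix c assume "c dvd ([:1,1:] :: real poly)" "c dvd [:-1,1:]"
  then have "c dvd [:1,1:] - [:-1,1:]" by (rule dvd_diff)
  moreover have "([:1,1:] - [:-1,1:] :: real poly) = [:2:]" by simp
  ultimately have "c dvd [:2:]" by simp
  moreover have "is_unit ([:2:] :: real poly)" by (subst is_unit_iff_degree) auto
  ultimately show "is_unit c" using dvd_unit_imp_unit by blast
qed

definition a0 :: "nat \<Rightarrow> nat" where "a0 k = (if k = 0 then 0 else (k - 1) div 2 + 1)"

definition Lrow :: "nat \<Rightarrow> ((real\<Rightarrow>real)\<Rightarrow>real) \<Rightarrow> nat \<Rightarrow> real poly \<Rightarrow> real" where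
 "Lrow k Jh \<rho> Q = (if \<rho> < a0 k then poly ((pderiv^^\<rho>) Q) (-1)
     else if \<rho> < k then poly ((pderiv^^(\<rho> - a0 k + 1)) Q) 1
     else Jh (\<lambda>s. s^(\<rho>-k) * poly (pderiv Q) s) + (if k = 0 then poly Q (-1) * (-1)^(\<rho>-k) else 0))"

lemma a0_le: "a0 k \<le> k" unfolding a0_def by auto

definition LinP :: "((real\<Rightarrow>real)\<Rightarrow>real) \<Rightarrow> bool" where
  "LinP Jh \<longleftrightarrow> (\<forall>P Q \<alpha> \<beta>. Jh (\<lambda>s. \<alpha> * poly P s + \<beta> * poly Q s) = \<alpha> * Jh (poly P) + \<beta> * Jh (poly Q))"

lemma LinP_zero: "LinP Jh \<Longrightarrow> Jh (\<lambda>s. 0) = 0"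
  unfolding LinP_def by (erule allE[of _ 0], erule allE[of _ 0], erule allE[of _ 0], erule allE[of _ 0]) simp

lemma LinP_sum:
  assumes L: "LinP Jh" and F: "finite F"
  shows "Jh (\<lambda>s. \<Sum>m\<in>F. c m * poly (P m) s) = (\<Sum>m\<in>F. c m * Jh (poly (P m)))"
  using F
proof (induction F rule: finite_induct)
  case empty
  then show ?case using LinP_zero[OF L] by simp
next
  case (insert x F)
  define R where "R = (\<Sum>m\<in>F. Polynomial.smult (c m) (P m))"
  have pR: "poly R = (\<lambda>s. \<Sum>m\<in>F. c m * poly (P m) s)" unfolding R_def by (auto simp: poly_sum)
  have "(\<lambda>s. \<Sum>m\<in>insert x F. c m * poly (P m) s) = (\<lambda>s. c x * poly (P x) s + 1 * poly R s)"
    using insert by (simp add: pR)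
  moreover have "Jh (\<lambda>s. c x * poly (P x) s + 1 * poly R s) = c x * Jh (poly (P x)) + 1 * Jh (poly R)"
    by (rule LinP_def[THEN iffD1, OF L, rule_format])
  ultimately have "Jh (\<lambda>s. \<Sum>m\<in>insert x F. c m * poly (P m) s) = c x * Jh (poly (P x)) + 1 * Jh (poly R)"
    by simp
  then show ?case using insert pR by simp
qed

lemma LinP_mul:
  assumes L: "LinP Jh" and d: "degree \<phi> \<le> n"
  shows "Jh (\<lambda>s. poly Q s * poly \<phi> s) = (\<Sum>m\<le>n. coeff \<phi> m * Jh (\<lambda>s. s^m * poly Q s))"
proof -
  have "(\<lambda>s. poly Q s * poly \<phi> s) = (\<lambda>s. \<Sum>m\<le>n. coeff \<phi> m * poly (monom 1 m * Q) s)"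
  proof
    fix s
    have "poly \<phi> s = (\<Sum>m\<le>n. coeff \<phi> m * s^m)"
      by (subst poly_as_sum_of_monoms'[OF d, symmetric]) (simp add: poly_sum poly_monom)
    then show "poly Q s * poly \<phi> s = (\<Sum>m\<le>n. coeff \<phi> m * poly (monom 1 m * Q) s)"
      by (simp add: sum_distrib_left poly_monom algebra_simps)
  qed
  moreover have "\<And>m. poly (monom 1 m * Q) = (\<lambda>s. s^m * poly Q s)" by (auto simp: poly_monom)
  moreover have "Jh (\<lambda>s. \<Sum>m\<le>n. coeff \<phi> m * poly (monom 1 m * Q) s) = (\<Sum>m\<le>n. coeff \<phi> m * Jh (poly (monom 1 m * Q)))"
    by (rule LinP_sum[OF L]) simp
  ultimately show ?thesis by simp
qed

lemma rows_key:
  assumes L: "LinP Jh" and kr: "k \<le> r" and rows: "\<forall>\<rho>\<le>r. Lrow k Jh \<rho> Q = 0" and d: "degree \<phi> \<le> r - k"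
  shows "Jh (\<lambda>s. poly (pderiv Q) s * poly \<phi> s) + (if k = 0 then poly Q (-1) * poly \<phi> (-1) else 0) = 0"
proof -
  have row: "Jh (\<lambda>s. s^m * poly (pderiv Q) s) + (if k = 0 then poly Q (-1) * (-1)^m else 0) = 0" if "m \<le> r - k" for m
  proof -
    have "Lrow k Jh (k + m) Q = 0" using rows that kr by auto
    then show ?thesis using a0_le[of k] unfolding Lrow_def by auto
  qed
  have pm: "poly \<phi> (-1) = (\<Sum>m\<le>r-k. coeff \<phi> m * (-1)^m)"
    by (subst poly_as_sum_of_monoms'[OF d, symmetric]) (simp add: poly_sum poly_monom)
  have "Jh (\<lambda>s. poly (pderiv Q) s * poly \<phi> s) + (if k = 0 then poly Q (-1) * poly \<phi> (-1) else 0)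
     = (\<Sum>m\<le>r-k. coeff \<phi> m * (Jh (\<lambda>s. s^m * poly (pderiv Q) s) + (if k = 0 then poly Q (-1) * (-1)^m else 0)))"
    unfolding LinP_mul[OF L d] pm by (simp add: sum_distrib_left algebra_simps sum.distrib)
  also have "\<dots> = 0" using row by simp
  finally show ?thesis .
qed

lemma kernel:
  assumes kr: "k \<le> r" and A1: "A1 r k Jh" and L: "LinP Jh" and dQ: "degree Q \<le> r"
    and rows: "\<forall>\<rho>\<le>r. Lrow k Jh \<rho> Q = 0"
  shows "Q = 0"
proof -
  have const: "Q = 0" if "pderiv Q = 0" and r0: "Lrow k Jh 0 Q = 0"
  proof -
    have "degree Q = 0" using that pderiv_eq_0_iff by blast
    then obtain c where c: "Q = [:c:]" by (meson degree_eq_zeroE)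
    show ?thesis
    proof (cases "k = 0")
      case True
      then have "Jh (\<lambda>s. 0) + c = 0" using r0 unfolding Lrow_def a0_def c by simp
      then show ?thesis using LinP_zero[OF L] c by simp
    next
      case False
      then have "c = 0" using r0 unfolding Lrow_def a0_def c by simp
      then show ?thesis using c by simp
    qed
  qed
  have r0: "Lrow k Jh 0 Q = 0" using rows by simp
  show ?thesis
  proof (cases "k = 0")
    case True
    have "pderiv Q \<in> Pdeg (int r - max 1 (int k))"
    proof (cases "pderiv Q = 0")
      case False
      then have "degree Q \<noteq> 0" using pderiv_eq_0_iff by blast
      then show ?thesis unfolding Pdeg_def using dQ True degree_pderiv[of Q] by auto
    qed (simp add: Pdeg_def)
    moreover have "\<forall>\<phi>\<in>Pdeg (int r - max 1 (int k)).
          Jh (\<lambda>s. (1 - s) ^ (k div 2) * (1 + s) ^ nat \<bar>(int k - 1) div 2\<bar> * poly (pderiv Q) s * poly \<phi> s) = 0"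
    proof
      fix \<phi> assume "\<phi> \<in> Pdeg (int r - max 1 (int k))"
      then have d\<phi>: "\<phi> = 0 \<or> int (degree \<phi>) \<le> int r - 1" using True unfolding Pdeg_def by auto
      define \<Phi> where "\<Phi> = [:1,1:] * \<phi>"
      have "degree \<Phi> \<le> r - k"
      proof (cases "\<phi> = 0")
        case False
        then have "degree \<Phi> = 1 + degree \<phi>" unfolding \<Phi>_def by (subst degree_mult_eq) auto
        then show ?thesis using d\<phi> False True by auto
      qed (simp add: \<Phi>_def)
      from rows_key[OF L kr rows this] True
      have "Jh (\<lambda>s. poly (pderiv Q) s * poly \<Phi> s) = 0" by (simp add: \<Phi>_def)
      moreover have "(\<lambda>s. (1 - s) ^ (k div 2) * (1 + s) ^ nat \<bar>(int k - 1) div 2\<bar> * poly (pderiv Q) s * poly \<phi> s)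
          = (\<lambda>s. poly (pderiv Q) s * poly \<Phi> s)" using True by (auto simp: \<Phi>_def algebra_simps)
      ultimately show "Jh (\<lambda>s. (1 - s) ^ (k div 2) * (1 + s) ^ nat \<bar>(int k - 1) div 2\<bar> * poly (pderiv Q) s * poly \<phi> s) = 0"
        by simp
    qed
    ultimately have "pderiv Q = 0" using A1 unfolding A1_def by blast
    then show ?thesis using const r0 by blast
  next
    case False
    define A where "A = k div 2"
    define B where "B = (k - 1) div 2"
    have AB: "A + B = k - 1" unfolding A_def B_def using False by linarith
    have a0: "a0 k = B + 1" unfolding a0_def B_def using False by simp
    have left: "poly ((pderiv ^^ i) (pderiv Q)) (-1) = 0" if "i < B" for i
    proof -
      have "Lrow k Jh (Suc i) Q = 0" using rows that kr AB by auto
      then show ?thesis using that a0 unfolding Lrow_def by (simp add: funpow_Suc_right del: funpow.simps)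
    qed
    have right: "poly ((pderiv ^^ i) (pderiv Q)) 1 = 0" if "i < A" for i
    proof -
      have "Lrow k Jh (B + 1 + i) Q = 0" using rows that kr AB by auto
      moreover have "B + 1 + i < k" using that AB by linarith
      ultimately show ?thesis using that a0 unfolding Lrow_def by (simp add: funpow_Suc_right del: funpow.simps)
    qed
    have dl: "[:1,1:]^B dvd pderiv Q" using deriv_zero_dvd[of B "pderiv Q" "-1"] left by simp
    have dr: "[:-1,1:]^A dvd pderiv Q" using deriv_zero_dvd[of A "pderiv Q" 1] right by simp
    then obtain R where R: "pderiv Q = [:-1,1:]^A * R" by (rule dvdE)
    have cop: "coprime ([:1,1:]^B) ([:-1,1:]^A :: real poly)" using coprime_lin by (auto simp: coprime_power_left_iff coprime_power_right_iff)
    have "[:1,1:]^B dvd R" using dl cop unfolding R by (simp add: coprime_dvd_mult_right_iff)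
    then obtain \<psi>0 where \<psi>0: "R = [:1,1:]^B * \<psi>0" by (rule dvdE)
    define \<psi> where "\<psi> = Polynomial.smult ((-1)^A) \<psi>0"
    have pQ: "poly (pderiv Q) s = (1 - s)^A * (1 + s)^B * poly \<psi> s" for s
    proof -
      have "poly (pderiv Q) s = (s - 1)^A * (1 + s)^B * poly \<psi>0 s" using R \<psi>0 by (simp add: poly_power algebra_simps)
      also have "(s - 1)^A = (-1)^A * (1 - s)^A" by (metis minus_diff_eq power_minus)
      finally show ?thesis by (simp add: \<psi>_def)
    qed
    have "\<psi> \<in> Pdeg (int r - max 1 (int k))"
    proof (cases "\<psi> = 0")
      case False
      then have "\<psi>0 \<noteq> 0" by (simp add: \<psi>_def)
      then have "pderiv Q = [:-1,1:]^A * [:1,1:]^B * \<psi>0" using R \<psi>0 by (simp add: mult.assoc)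
      moreover have "degree ([:-1,1:]^A * [:1,1:]^B * \<psi>0 :: real poly) = A + B + degree \<psi>0"
        using \<open>\<psi>0 \<noteq> 0\<close> by (simp add: degree_mult_eq degree_linear_power)
      moreover have "pderiv Q \<noteq> 0" using \<open>\<psi>0 \<noteq> 0\<close> R \<psi>0 by simp
      ultimately have "degree (pderiv Q) = A + B + degree \<psi>0" by simp
      moreover have "degree (pderiv Q) \<le> r - 1" using dQ degree_pderiv[of Q] by simp
      ultimately have "degree \<psi> \<le> r - k" using AB False kr by (simp add: \<psi>_def)
      then show ?thesis unfolding Pdeg_def using False kr \<open>k \<noteq> 0\<close> by auto
    qed (simp add: Pdeg_def)
    moreover have "\<forall>\<phi>\<in>Pdeg (int r - max 1 (int k)).
          Jh (\<lambda>s. (1 - s) ^ (k div 2) * (1 + s) ^ nat \<bar>(int k - 1) div 2\<bar> * poly \<psi> s * poly \<phi> s) = 0"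
    proof
      fix \<phi> assume "\<phi> \<in> Pdeg (int r - max 1 (int k))"
      then have "degree \<phi> \<le> r - k" using False kr unfolding Pdeg_def by auto
      from rows_key[OF L kr rows this] False
      have "Jh (\<lambda>s. poly (pderiv Q) s * poly \<phi> s) = 0" by simp
      moreover have "nat \<bar>(int k - 1) div 2\<bar> = B" unfolding B_def using False by (simp add: zdiv_int)
      ultimately show "Jh (\<lambda>s. (1 - s) ^ (k div 2) * (1 + s) ^ nat \<bar>(int k - 1) div 2\<bar> * poly \<psi> s * poly \<phi> s) = 0"
        by (simp add: pQ A_def)
    qed
    ultimately have "\<psi> = 0" using A1 unfolding A1_def by blast
    then have "poly (pderiv Q) = poly 0" using pQ by (intro ext) simp
    then have "pderiv Q = 0" using poly_eq_poly_eq_iff by blast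
    then show ?thesis using const r0 by blast
  qed
qed

lemma higher_pderiv_smult: "(pderiv ^^ n) (Polynomial.smult c p) = Polynomial.smult c ((pderiv ^^ n) p)"
  by (induction n) (auto simp: pderiv_smult)

lemma Lrow_lin:
  assumes L: "LinP Jh"
  shows "Lrow k Jh \<rho> (Polynomial.smult \<alpha> P + Polynomial.smult \<beta> Q) = \<alpha> * Lrow k Jh \<rho> P + \<beta> * Lrow k Jh \<rho> Q"
proof -
  have "Jh (\<lambda>s. s^m * poly (pderiv (Polynomial.smult \<alpha> P + Polynomial.smult \<beta> Q)) s)
     = \<alpha> * Jh (\<lambda>s. s^m * poly (pderiv P) s) + \<beta> * Jh (\<lambda>s. s^m * poly (pderiv Q) s)" for m
  proof -
    have "(\<lambda>s. s^m * poly (pderiv (Polynomial.smult \<alpha> P + Polynomial.smult \<beta> Q)) s)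
       = (\<lambda>s. \<alpha> * poly (monom 1 m * pderiv P) s + \<beta> * poly (monom 1 m * pderiv Q) s)"
      by (auto simp: pderiv_add pderiv_smult poly_monom algebra_simps)
    moreover have "poly (monom 1 m * R) = (\<lambda>s. s^m * poly R s)" for R :: "real poly" by (rule ext) (simp add: poly_monom)
    ultimately show ?thesis using L unfolding LinP_def by metis
  qed
  note J = this
  show ?thesis
  proof (cases "\<rho> < a0 k")
    case True then show ?thesis unfolding Lrow_def by (simp add: higher_pderiv_add higher_pderiv_smult)
  next
    case F1: False
    show ?thesis
    proof (cases "\<rho> < k")
      case True then show ?thesis using F1 unfolding Lrow_def by (simp add: higher_pderiv_add higher_pderiv_smult pderiv_add pderiv_smult)
    next
      case F2: False
      have e: "Lrow k Jh \<rho> R = Jh (\<lambda>s. s^(\<rho>-k) * poly (pderiv R) s) + (if k = 0 then poly R (-1) * (-1)^(\<rho>-k) else 0)" for R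
        unfolding Lrow_def by (subst if_not_P[OF F1], subst if_not_P[OF F2]) (rule refl)
      show ?thesis unfolding e J[of "\<rho>-k"] by (simp add: algebra_simps)
    qed
  qed
qed

lemma Lrow_sum:
  assumes L: "LinP Jh" and F: "finite F"
  shows "Lrow k Jh \<rho> (\<Sum>i\<in>F. Polynomial.smult (c i) (P i)) = (\<Sum>i\<in>F. c i * Lrow k Jh \<rho> (P i))"
  using F
proof (induction F rule: finite_induct)
  case empty
  have "Lrow k Jh \<rho> (Polynomial.smult 0 0 + Polynomial.smult 0 0) = 0 * Lrow k Jh \<rho> 0 + 0 * Lrow k Jh \<rho> 0"
    by (rule Lrow_lin[OF L])
  then show ?case by simp
next
  case (insert x F)
  have "Lrow k Jh \<rho> (Polynomial.smult (c x) (P x) + Polynomial.smult 1 (\<Sum>i\<in>F. Polynomial.smult (c i) (P i)))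
     = c x * Lrow k Jh \<rho> (P x) + 1 * Lrow k Jh \<rho> (\<Sum>i\<in>F. Polynomial.smult (c i) (P i))"
    by (rule Lrow_lin[OF L])
  then show ?case using insert by simp
qed

lemma solve:
  assumes kr: "k \<le> r" and A1: "A1 r k Jh" and L: "LinP Jh"
  shows "\<exists>B. \<forall>y. (\<forall>\<rho>\<le>r. Lrow k Jh \<rho> (\<Sum>i\<le>r. monom (\<Sum>l\<le>r. B i l * y l) i) = y \<rho>)
          \<and> (\<forall>Q. degree Q \<le> r \<and> (\<forall>\<rho>\<le>r. Lrow k Jh \<rho> Q = y \<rho>) \<longrightarrow> (\<forall>i\<le>r. coeff Q i = (\<Sum>l\<le>r. B i l * y l)))"
proof -
  define A where "A = (\<lambda>\<rho> i. Lrow k Jh \<rho> (monom 1 i))"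
  have msum: "(\<Sum>i\<le>r. monom (x i) i) = (\<Sum>i\<le>r. Polynomial.smult (x i) (monom 1 i))" for x :: "nat \<Rightarrow> real"
    by (simp add: smult_monom)
  have Lx: "Lrow k Jh \<rho> (\<Sum>i\<le>r. monom (x i) i) = (\<Sum>i\<le>r. A \<rho> i * x i)" for \<rho> and x :: "nat \<Rightarrow> real"
    unfolding msum Lrow_sum[OF L finite_atMost] A_def by (simp add: mult.commute)
  have cx: "coeff (\<Sum>i\<le>r. monom (x i) i) j = (if j \<le> r then x j else 0)" for x :: "nat \<Rightarrow> real" and j
    by (simp add: coeff_sum coeff_monom)
  have "\<exists>B. (\<forall>y i. i<Suc r \<longrightarrow> (\<Sum>j<Suc r. A i j * (\<Sum>l<Suc r. B j l * y l)) = y i)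
           \<and> (\<forall>y x. (\<forall>i<Suc r. (\<Sum>j<Suc r. A i j * x j) = y i) \<longrightarrow> (\<forall>j<Suc r. x j = (\<Sum>l<Suc r. B j l * y l)))"
  proof (rule sq_inv)
    fix x :: "nat \<Rightarrow> real" assume h: "\<forall>i<Suc r. (\<Sum>j<Suc r. A i j * x j) = 0"
    define Q where "Q = (\<Sum>i\<le>r. monom (x i) i)"
    have "degree Q \<le> r" unfolding Q_def by (intro degree_sum_le) (auto simp: degree_monom_le intro: order.trans[OF degree_monom_le])
    moreover have "\<forall>\<rho>\<le>r. Lrow k Jh \<rho> Q = 0" using h unfolding Q_def Lx by (simp add: lessThan_Suc_atMost)
    ultimately have "Q = 0" using kernel[OF kr A1 L] by blast
    then show "\<forall>j<Suc r. x j = 0" using cx[of x] unfolding Q_def by (metis coeff_0 less_Suc_eq_le)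
  qed
  then obtain B where B1: "\<And>y i. i \<le> r \<Longrightarrow> (\<Sum>j\<le>r. A i j * (\<Sum>l\<le>r. B j l * y l)) = y i"
    and B2: "\<And>y x. (\<forall>i\<le>r. (\<Sum>j\<le>r. A i j * x j) = y i) \<Longrightarrow> (\<forall>j\<le>r. x j = (\<Sum>l\<le>r. B j l * y l))"
    unfolding lessThan_Suc_atMost less_Suc_eq_le by blast
  show ?thesis
  proof (intro exI allI conjI impI)
    fix y \<rho> assume "\<rho> \<le> r"
    then show "Lrow k Jh \<rho> (\<Sum>i\<le>r. monom (\<Sum>l\<le>r. B i l * y l) i) = y \<rho>" unfolding Lx using B1 by simp
  next
    fix y Q i assume h: "degree Q \<le> r \<and> (\<forall>\<rho>\<le>r. Lrow k Jh \<rho> Q = y \<rho>)" and i: "i \<le> r"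
    then have Q: "Q = (\<Sum>i\<le>r. monom (coeff Q i) i)" using poly_as_sum_of_monoms' by metis
    have "\<forall>\<rho>\<le>r. (\<Sum>j\<le>r. A \<rho> j * coeff Q j) = y \<rho>" using h Lx[of _ "coeff Q"] Q by metis
    then show "coeff Q i = (\<Sum>l\<le>r. B i l * y l)" using B2 i by blast
  qed
qed

lemma vd_cong:
  assumes "\<forall>y\<in>S. F y = G y" "x \<in> S"
  shows "vector_derivative F (at x within S) = vector_derivative G (at x within S)"
proof -
  have "(F has_vector_derivative f') (at x within S) \<longleftrightarrow> (G has_vector_derivative f') (at x within S)" for f'
    using assms has_vector_derivative_transform[of x S] by metis
  then show ?thesis unfolding vector_derivative_def by simp
qed

lemma nderiv_cong:
  assumes "\<forall>y\<in>S. f y = g y" "x \<in> S"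
  shows "nderiv S j f x = nderiv S j g x"
  using assms(2)
proof (induction j arbitrary: x)
  case 0
  then show ?case using assms(1) by simp
next
  case (Suc j)
  then show ?case by (simp add: vd_cong)
qed

lemma Ck_on_cong:
  assumes "\<forall>y\<in>S. f y = g y" "Ck_on k S f"
  shows "Ck_on k S g"
  unfolding Ck_on_def
proof (intro conjI ballI allI impI)
  fix j x assume "j < k" "x \<in> S"
  then have "(nderiv S j f has_vector_derivative nderiv S (Suc j) f x) (at x within S)"
    using assms(2) unfolding Ck_on_def by blast
  then have "(nderiv S j g has_vector_derivative nderiv S (Suc j) f x) (at x within S)"
    using has_vector_derivative_transform[of x S "nderiv S j g" "nderiv S j f"] nderiv_cong[OF assms(1)] \<open>x\<in>S\<close>
    by metis
  then show "(nderiv S j g has_vector_derivative nderiv S (Suc j) g x) (at x within S)"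
    using nderiv_cong[OF assms(1) \<open>x\<in>S\<close>] by metis
next
  fix j assume "j \<le> k"
  then have "continuous_on S (nderiv S j f)" using assms(2) unfolding Ck_on_def by blast
  then show "continuous_on S (nderiv S j g)"
    using continuous_on_cong[of S S "nderiv S j f" "nderiv S j g"] nderiv_cong[OF assms(1)] by metis
qed

lemma Ck_on_mono: "m \<le> n \<Longrightarrow> Ck_on n S f \<Longrightarrow> Ck_on m S f"
  unfolding Ck_on_def by auto

lemma nderiv_shift: "nderiv S j (nderiv S 1 f) = nderiv S (Suc j) f"
  by (induction j) auto

lemma Ck_on_Suc: "Ck_on (Suc n) S f \<Longrightarrow> Ck_on n S (nderiv S 1 f)"
  unfolding Ck_on_def nderiv_shift by auto

lemma nderiv_eqI:
  fixes F :: "nat \<Rightarrow> real \<Rightarrow> 'a::euclidean_space"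
  assumes cd: "c < d"
    and F0: "\<forall>x\<in>{c..d}. f x = F 0 x"
    and FD: "\<And>j x. j < n \<Longrightarrow> x \<in> {c..d} \<Longrightarrow> (F j has_vector_derivative F (Suc j) x) (at x within {c..d})"
  shows "j \<le> n \<Longrightarrow> x \<in> {c..d} \<Longrightarrow> nderiv {c..d} j f x = F j x"
proof (induction j arbitrary: x)
  case 0
  then show ?case using F0 by simp
next
  case (Suc j)
  have "nderiv {c..d} (Suc j) f x = vector_derivative (nderiv {c..d} j f) (at x within {c..d})" by simp
  also have "\<dots> = vector_derivative (F j) (at x within {c..d})"
    using Suc by (intro vd_cong) auto
  also have "\<dots> = F (Suc j) x"
    using FD[of j x] Suc.prems cd by (intro vector_derivative_within_closed_interval) auto
  finally show ?case .
qed

lemma Ck_onI: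
  fixes F :: "nat \<Rightarrow> real \<Rightarrow> 'a::euclidean_space"
  assumes cd: "c < d"
    and F0: "\<forall>x\<in>{c..d}. f x = F 0 x"
    and FD: "\<And>j x. j < n \<Longrightarrow> x \<in> {c..d} \<Longrightarrow> (F j has_vector_derivative F (Suc j) x) (at x within {c..d})"
    and FC: "\<And>j. j \<le> n \<Longrightarrow> continuous_on {c..d} (F j)"
  shows "Ck_on n {c..d} f"
proof -
  have e: "j \<le> n \<Longrightarrow> x \<in> {c..d} \<Longrightarrow> nderiv {c..d} j f x = F j x" for j x
    using nderiv_eqI[OF cd F0 FD] by blast
  show ?thesis unfolding Ck_on_def
  proof (intro conjI ballI allI impI)
    fix j x assume j: "j < n" and x: "x \<in> {c..d}"
    have "(F j has_vector_derivative F (Suc j) x) (at x within {c..d})" using FD j x by blast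
    then have "(nderiv {c..d} j f has_vector_derivative F (Suc j) x) (at x within {c..d})"
      using has_vector_derivative_transform[of x "{c..d}" "nderiv {c..d} j f" "F j"] e j x by auto
    then show "(nderiv {c..d} j f has_vector_derivative nderiv {c..d} (Suc j) f x) (at x within {c..d})"
      using e[of "Suc j" x] j x by simp
  next
    fix j assume j: "j \<le> n"
    show "continuous_on {c..d} (nderiv {c..d} j f)"
      using continuous_on_cong[of "{c..d}" "{c..d}" "F j" "nderiv {c..d} j f"] FC[OF j] e[OF j] by metis
  qed
qed

lemma Ck_on_D:
  assumes "Ck_on n S f" "j < n" "x \<in> S"
  shows "(nderiv S j f has_vector_derivative nderiv S (Suc j) f x) (at x within S)"
  using assms unfolding Ck_on_def by blast

lemma Ck_on_C:
  assumes "Ck_on n S f" "j \<le> n"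
  shows "continuous_on S (nderiv S j f)"
  using assms unfolding Ck_on_def by blast

lemma has_vd_within: "(f has_vector_derivative f') (at x) \<Longrightarrow> (f has_vector_derivative f') (at x within S)"
  by (rule has_vector_derivative_at_within)

lemma poly_vd: "(poly P has_vector_derivative poly (pderiv P) x) (at x within S)"
  using poly_DERIV[of P x] unfolding has_real_derivative_iff_has_vector_derivative
  by (rule has_vd_within)

lemma nderiv_poly:
  assumes cd: "c < d" and x: "x \<in> {c..d}"
  shows "nderiv {c..d} j (poly P) x = poly ((pderiv ^^ j) P) x"
  using nderiv_eqI[of c d "poly P" "\<lambda>j. poly ((pderiv ^^ j) P)" "Suc j" j x] cd x poly_vd by auto

lemma Ck_poly:
  assumes cd: "c < d"
  shows "Ck_on n {c..d} (poly P)"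
  by (rule Ck_onI[of c d _ "\<lambda>j. poly ((pderiv ^^ j) P)"]) (use cd poly_vd in \<open>auto intro: continuous_intros\<close>)

lemma lincomb:
  fixes g :: "'i \<Rightarrow> real \<Rightarrow> real" and cv :: "'i \<Rightarrow> 'a::euclidean_space"
  assumes cd: "c < d" and I: "finite I" and g: "\<And>i. i \<in> I \<Longrightarrow> Ck_on n {c..d} (g i)"
  shows "Ck_on n {c..d} (\<lambda>x. \<Sum>i\<in>I. g i x *\<^sub>R cv i)"
    and "j \<le> n \<Longrightarrow> x \<in> {c..d} \<Longrightarrow> nderiv {c..d} j (\<lambda>x. \<Sum>i\<in>I. g i x *\<^sub>R cv i) x = (\<Sum>i\<in>I. nderiv {c..d} j (g i) x *\<^sub>R cv i)"
proof -
  define F where "F = (\<lambda>j x. \<Sum>i\<in>I. nderiv {c..d} j (g i) x *\<^sub>R cv i)"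
  have FD: "(F j has_vector_derivative F (Suc j) x) (at x within {c..d})" if "j < n" "x \<in> {c..d}" for j x
    unfolding F_def
    by (intro has_vector_derivative_sum bounded_linear.has_vector_derivative[OF bounded_linear_scaleR_left] Ck_on_D[OF g]) (use that in auto)
  have FC: "continuous_on {c..d} (F j)" if "j \<le> n" for j
    unfolding F_def by (intro continuous_intros Ck_on_C[OF g]) (use that in auto)
  show "Ck_on n {c..d} (\<lambda>x. \<Sum>i\<in>I. g i x *\<^sub>R cv i)"
    by (rule Ck_onI[where F=F, OF cd _ FD FC]) (auto simp: F_def)
  show "j \<le> n \<Longrightarrow> x \<in> {c..d} \<Longrightarrow> nderiv {c..d} j (\<lambda>x. \<Sum>i\<in>I. g i x *\<^sub>R cv i) x = (\<Sum>i\<in>I. nderiv {c..d} j (g i) x *\<^sub>R cv i)"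
    using nderiv_eqI[where F=F, OF cd _ FD, of "\<lambda>x. \<Sum>i\<in>I. g i x *\<^sub>R cv i"] by (auto simp: F_def)
qed

lemma inner_Ck:
  fixes f :: "real \<Rightarrow> 'a::euclidean_space"
  assumes cd: "c < d" and f: "Ck_on n {c..d} f"
  shows "Ck_on n {c..d} (\<lambda>x. f x \<bullet> u)"
    and "j \<le> n \<Longrightarrow> x \<in> {c..d} \<Longrightarrow> nderiv {c..d} j (\<lambda>x. f x \<bullet> u) x = nderiv {c..d} j f x \<bullet> u"
proof -
  define F where "F = (\<lambda>j x. nderiv {c..d} j f x \<bullet> u)"
  have FD: "(F j has_vector_derivative F (Suc j) x) (at x within {c..d})" if "j < n" "x \<in> {c..d}" for j x
    unfolding F_def
    by (intro bounded_linear.has_vector_derivative[OF bounded_linear_inner_left] Ck_on_D[OF f]) (use that in auto)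
  have FC: "continuous_on {c..d} (F j)" if "j \<le> n" for j
    unfolding F_def by (intro continuous_intros Ck_on_C[OF f]) (use that in auto)
  show "Ck_on n {c..d} (\<lambda>x. f x \<bullet> u)"
    by (rule Ck_onI[where F=F, OF cd _ FD FC]) (auto simp: F_def)
  show "j \<le> n \<Longrightarrow> x \<in> {c..d} \<Longrightarrow> nderiv {c..d} j (\<lambda>x. f x \<bullet> u) x = nderiv {c..d} j f x \<bullet> u"
    using nderiv_eqI[where F=F, OF cd _ FD, of "\<lambda>x. f x \<bullet> u"] by (auto simp: F_def)
qed

lemma Tmap_image:
  assumes ab: "a < b"
  shows "Tmap a b ` {-1..1} = {a..b}"
proof
  show "Tmap a b ` {-1..1} \<subseteq> {a..b}"
  proof
    fix y assume "y \<in> Tmap a b ` {-1..1}"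
    then obtain s where s: "s \<in> {-1..1}" "y = Tmap a b s" by auto
    have "(b - a) / 2 * s \<le> (b - a) / 2 * 1" by (rule mult_left_mono) (use s ab in auto)
    moreover have "(b - a) / 2 * (-1) \<le> (b - a) / 2 * s" by (rule mult_left_mono) (use s ab in auto)
    ultimately have "a \<le> y \<and> y \<le> b" using s(2) unfolding Tmap_def by (simp add: field_simps)
    then show "y \<in> {a..b}" by auto
  qed
next
  show "{a..b} \<subseteq> Tmap a b ` {-1..1}"
  proof
    fix y assume y: "y \<in> {a..b}"
    have "Tinv a b y \<in> {-1..1}" "Tmap a b (Tinv a b y) = y"
      using y ab unfolding Tinv_def Tmap_def by (auto simp: field_simps)
    then show "y \<in> Tmap a b ` {-1..1}" by (metis imageI)
  qed
qed

lemma Tmap_Tinv: "a < b \<Longrightarrow> Tmap a b (Tinv a b y) = y"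
  unfolding Tinv_def Tmap_def by (auto simp: field_simps)

lemma Tinv_Tmap: "a < b \<Longrightarrow> Tinv a b (Tmap a b s) = s"
  unfolding Tinv_def Tmap_def by (auto simp: field_simps)

lemma Tmap_vd: "(Tmap a b has_vector_derivative (b - a) / 2) (at s within S)"
proof -
  have "((\<lambda>s. (a + b) / 2 + (b - a) / 2 * s) has_real_derivative (b - a) / 2) (at s within S)"
    by (auto intro!: derivative_eq_intros)
  then show ?thesis unfolding Tmap_def[abs_def] has_real_derivative_iff_has_vector_derivative .
qed

lemma affine_Ck:
  fixes f :: "real \<Rightarrow> 'a::euclidean_space"
  assumes ab: "a < b" and f: "Ck_on n {a..b} f"
  shows "Ck_on n {-1..1} (\<lambda>s. f (Tmap a b s))"
    and "j \<le> n \<Longrightarrow> s \<in> {-1..1} \<Longrightarrow> nderiv {-1..1} j (\<lambda>s. f (Tmap a b s)) s = ((b - a) / 2)^j *\<^sub>R nderiv {a..b} j f (Tmap a b s)"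
proof -
  define h where "h = (b - a) / 2"
  define F where "F = (\<lambda>j s. h^j *\<^sub>R nderiv {a..b} j f (Tmap a b s))"
  have TI: "Tmap a b ` {-1..1} = {a..b}" by (rule Tmap_image[OF ab])
  have FD: "(F j has_vector_derivative F (Suc j) x) (at x within {-1..1})" if "j < n" "x \<in> {-1..1}" for j x
  proof -
    have T: "Tmap a b x \<in> {a..b}" using TI that by auto
    have "(nderiv {a..b} j f \<circ> Tmap a b has_vector_derivative h *\<^sub>R nderiv {a..b} (Suc j) f (Tmap a b x)) (at x within {-1..1})"
      unfolding h_def
      by (rule vector_diff_chain_within[OF Tmap_vd]) (use Ck_on_D[OF f \<open>j<n\<close> T] TI in auto)
    then have "((\<lambda>s. h^j *\<^sub>R (nderiv {a..b} j f \<circ> Tmap a b) s) has_vector_derivative h^j *\<^sub>R (h *\<^sub>R nderiv {a..b} (Suc j) f (Tmap a b x))) (at x within {-1..1})"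
      by (rule bounded_linear.has_vector_derivative[OF bounded_linear_scaleR_right])
    then show ?thesis unfolding F_def by (simp add: o_def mult.commute)
  qed
  have FC: "continuous_on {-1..1} (F j)" if "j \<le> n" for j
  proof -
    have "continuous_on {-1..1} (\<lambda>s. nderiv {a..b} j f (Tmap a b s))"
    proof (rule continuous_on_compose2[OF Ck_on_C[OF f that]])
      show "continuous_on {-1..1} (Tmap a b)" unfolding Tmap_def[abs_def] by (intro continuous_intros)
    qed (use TI in auto)
    then show ?thesis unfolding F_def by (intro continuous_intros)
  qed
  show "Ck_on n {-1..1} (\<lambda>s. f (Tmap a b s))"
    by (rule Ck_onI[where F=F, OF _ _ FD FC]) (auto simp: F_def)
  show "j \<le> n \<Longrightarrow> s \<in> {-1..1} \<Longrightarrow> nderiv {-1..1} j (\<lambda>s. f (Tmap a b s)) s = ((b - a) / 2)^j *\<^sub>R nderiv {a..b} j f (Tmap a b s)"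
    using nderiv_eqI[where F=F, OF _ _ FD, of "\<lambda>s. f (Tmap a b s)"] by (auto simp: F_def h_def)
qed

lemma xmul_Ck:
  fixes g :: "real \<Rightarrow> real"
  assumes cd: "c < d" and g: "Ck_on n {c..d} g"
  shows "Ck_on n {c..d} (\<lambda>x. x * g x)"
    and "j \<le> n \<Longrightarrow> x \<in> {c..d} \<Longrightarrow> nderiv {c..d} j (\<lambda>x. x * g x) x = x * nderiv {c..d} j g x + of_nat j * nderiv {c..d} (j - 1) g x"
proof -
  define G where "G = (\<lambda>j. nderiv {c..d} j g)"
  define F where "F = (\<lambda>j x. x * G j x + of_nat j * G (j - 1) x)"
  have FD: "(F j has_vector_derivative F (Suc j) x) (at x within {c..d})" if "j < n" "x \<in> {c..d}" for j x
  proof -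
    have d1: "(G j has_vector_derivative G (Suc j) x) (at x within {c..d})" using Ck_on_D[OF g that] by (simp add: G_def)
    have d2: "(G (j-1) has_vector_derivative G (Suc (j-1)) x) (at x within {c..d})" using Ck_on_D[OF g _ that(2), of "j-1"] that by (simp add: G_def)
    have "(F j has_vector_derivative
         (x * G (Suc j) x + 1 * G j x) + of_nat j * G (Suc (j-1)) x) (at x within {c..d})"
      unfolding F_def by (intro has_vector_derivative_add has_vector_derivative_mult has_vector_derivative_mult_right d1 d2 has_vector_derivative_id)
    moreover have eq: "(x * G (Suc j) x + 1 * G j x) + of_nat j * G (Suc (j-1)) x = F (Suc j) x"
      by (cases j) (auto simp: F_def algebra_simps)
    ultimately show ?thesis by (simp only: eq)
  qed
  have FC: "continuous_on {c..d} (F j)" if "j \<le> n" for j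
    unfolding F_def G_def by (intro continuous_intros Ck_on_C[OF g]) (use that in auto)
  show "Ck_on n {c..d} (\<lambda>x. x * g x)"
    by (rule Ck_onI[where F=F, OF cd _ FD FC]) (auto simp: F_def G_def)
  show "j \<le> n \<Longrightarrow> x \<in> {c..d} \<Longrightarrow> nderiv {c..d} j (\<lambda>x. x * g x) x = x * nderiv {c..d} j g x + of_nat j * nderiv {c..d} (j - 1) g x"
    using nderiv_eqI[where F=F, OF cd _ FD, of "\<lambda>x. x * g x"] by (auto simp: F_def G_def)
qed

lemma supn_bdd:
  assumes "continuous_on T g" "compact T" "S \<subseteq> T"
  shows "bdd_above ((\<lambda>x. norm (g x)) ` S)"
proof -
  have "compact ((\<lambda>x. norm (g x)) ` T)"
    by (rule compact_continuous_image) (use assms in \<open>auto intro: continuous_intros\<close>)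
  then have "bdd_above ((\<lambda>x. norm (g x)) ` T)" by (meson bounded_imp_bdd_above compact_imp_bounded)
  then show ?thesis using assms(3) by (meson bdd_above_mono image_mono)
qed

lemma supn_upper:
  assumes "continuous_on T g" "compact T" "S \<subseteq> T" "x \<in> S"
  shows "norm (g x) \<le> supn S g"
  unfolding supn_def using cSUP_upper[of x S "\<lambda>x. norm (g x)"] supn_bdd[OF assms(1-3)] assms(4) by simp

lemma supn_le:
  assumes "S \<noteq> {}" "\<And>x. x \<in> S \<Longrightarrow> norm (g x) \<le> K"
  shows "supn S g \<le> K"
  unfolding supn_def using assms by (intro cSUP_least) auto

lemma supn_nonneg:
  assumes "continuous_on T g" "compact T" "S \<subseteq> T" "S \<noteq> {}"
  shows "0 \<le> supn S g"
proof -
  obtain x where "x \<in> S" using assms(4) by auto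
  then show ?thesis using supn_upper[OF assms(1-3)] norm_ge_zero order.trans by blast
qed

lemma supn_cong:
  assumes "\<And>x. x \<in> S \<Longrightarrow> norm (f x) = norm (g x)"
  shows "supn S f = supn S g"
  unfolding supn_def using assms by (intro SUP_cong) auto

lemma supn_zero: "S \<noteq> {} \<Longrightarrow> (\<And>x. x \<in> S \<Longrightarrow> f x = 0) \<Longrightarrow> supn S f = 0"
  unfolding supn_def by (subst SUP_cong[of S S _ "\<lambda>x. 0"]) auto

lemma Ck_const0: assumes "c < d" shows "Ck_on n {c..d} (\<lambda>x. 0::real)"
proof -
  have "poly 0 = (\<lambda>x::real. 0)" by auto
  then show ?thesis using Ck_poly[of c d n 0] assms by metis
qed

lemma nderiv_zero_on:
  assumes "c < d" "\<forall>y\<in>{c..d}. f y = (0::real)" "x \<in> {c..d}"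
  shows "nderiv {c..d} j f x = 0"
proof -
  have "nderiv {c..d} j f x = nderiv {c..d} j (poly 0) x" using nderiv_cong[of "{c..d}" f "poly 0"] assms by auto
  also have "\<dots> = 0" using nderiv_poly[OF assms(1,3)] by simp
  finally show ?thesis .
qed

lemma scaleR_Ck:
  fixes u :: "'a::euclidean_space"
  assumes cd: "c < d" and f: "Ck_on n {c..d} f"
  shows "Ck_on n {c..d} (\<lambda>x. f x *\<^sub>R u)"
    and "j \<le> n \<Longrightarrow> x \<in> {c..d} \<Longrightarrow> nderiv {c..d} j (\<lambda>x. f x *\<^sub>R u) x = nderiv {c..d} j f x *\<^sub>R u"
  using lincomb(1)[OF cd, where I="{u}" and g="\<lambda>_. f" and cv="\<lambda>i. i" and n=n]
    lincomb(2)[OF cd, where I="{u}" and g="\<lambda>_. f" and cv="\<lambda>i. i" and n=n and j=j and x=x] f by auto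

lemma sum_Ck:
  fixes f :: "'i \<Rightarrow> real \<Rightarrow> real"
  assumes cd: "c < d" and I: "finite I" and f: "\<And>i. i \<in> I \<Longrightarrow> Ck_on n {c..d} (f i)"
  shows "Ck_on n {c..d} (\<lambda>x. \<Sum>i\<in>I. cc i * f i x)"
  using lincomb(1)[OF cd I f, of "\<lambda>i. i" cc] by (simp add: mult.commute)

lemma basis_sum_single:
  fixes u0 :: "'a::euclidean_space"
  assumes "u0 \<in> Basis"
  shows "(\<Sum>u\<in>Basis. (if u = u0 then x else 0) *\<^sub>R u) = x *\<^sub>R u0"
  using assms by (simp add: if_distrib[of "\<lambda>t. t *\<^sub>R _"] sum.delta' cong: if_cong)

definition linJp :: "nat \<Rightarrow> ((real \<Rightarrow> real) \<Rightarrow> real) \<Rightarrow> bool" where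
  "linJp kJs Jh \<longleftrightarrow> (\<forall>f g (\<alpha>::real) \<beta>. Ck_on kJs {-1..1} f \<and> Ck_on kJs {-1..1} g \<longrightarrow>
                 Jh (\<lambda>s. \<alpha> * f s + \<beta> * g s) = \<alpha> * Jh f + \<beta> * Jh g)"

definition linIp :: "nat \<Rightarrow> ((real \<Rightarrow> real) \<Rightarrow> real \<Rightarrow> real) \<Rightarrow> bool" where
  "linIp kI Ih \<longleftrightarrow> (\<forall>f g (\<alpha>::real) \<beta>. Ck_on kI {-1..1} f \<and> Ck_on kI {-1..1} g \<longrightarrow>
                 (\<forall>s\<in>{-1..1}. Ih (\<lambda>x. \<alpha> * f x + \<beta> * g x) s = \<alpha> * Ih f s + \<beta> * Ih g s))"

definition regIp :: "nat \<Rightarrow> ((real \<Rightarrow> real) \<Rightarrow> real \<Rightarrow> real) \<Rightarrow> bool" where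
  "regIp kI Ih \<longleftrightarrow> (\<forall>l f. Ck_on (max kI l) {-1..1} f \<longrightarrow> Ck_on l {-1..1} (Ih f))"

lemma linJ_D: "linJp kJs Jh \<Longrightarrow> Ck_on kJs {-1..1} f \<Longrightarrow> Ck_on kJs {-1..1} g \<Longrightarrow>
   Jh (\<lambda>s. \<alpha> * f s + \<beta> * g s) = \<alpha> * Jh f + \<beta> * Jh g"
  unfolding linJp_def by blast

lemma linI_D: "linIp kI Ih \<Longrightarrow> Ck_on kI {-1..1} f \<Longrightarrow> Ck_on kI {-1..1} g \<Longrightarrow> s \<in> {-1..1} \<Longrightarrow>
   Ih (\<lambda>x. \<alpha> * f x + \<beta> * g x) s = \<alpha> * Ih f s + \<beta> * Ih g s"
  unfolding linIp_def by blast

lemma Jh_zero: "linJp kJs Jh \<Longrightarrow> Jh (\<lambda>s. 0) = 0"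
  using linJ_D[of kJs Jh "\<lambda>s. 0" "\<lambda>s. 0" 0 0] Ck_const0[of "-1" 1] by simp

lemma Ih_zero: "linIp kI Ih \<Longrightarrow> s \<in> {-1..1} \<Longrightarrow> Ih (\<lambda>s. 0) s = 0"
  using linI_D[of kI Ih "\<lambda>s. 0" "\<lambda>s. 0" s 0 0] Ck_const0[of "-1" 1] by simp

lemma Ih_scale: "linIp kI Ih \<Longrightarrow> Ck_on kI {-1..1} f \<Longrightarrow> s \<in> {-1..1} \<Longrightarrow> Ih (\<lambda>x. c * f x) s = c * Ih f s"
  using linI_D[of kI Ih f f s c 0] by simp

lemma LinP_of: "linJp kJs Jh \<Longrightarrow> LinP Jh"
  unfolding LinP_def using linJ_D[of kJs Jh] Ck_poly[of "-1" 1] by simp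

lemma inner_scaleR_basis:
  fixes u0 u :: "'a::euclidean_space"
  assumes "u0 \<in> Basis" "u \<in> Basis"
  shows "(\<lambda>s. (f s *\<^sub>R u0) \<bullet> u) = (if u = u0 then f else (\<lambda>s. 0))"
  using assms by (auto simp: inner_Basis)

lemma vecJ_single:
  fixes u0 :: "'a::euclidean_space"
  assumes L: "linJp kJs Jh" and u0: "u0 \<in> Basis"
  shows "vecJ Jh (\<lambda>s. f s *\<^sub>R u0) = Jh f *\<^sub>R u0"
proof -
  have "vecJ Jh (\<lambda>s. f s *\<^sub>R u0) = (\<Sum>u\<in>Basis. (if u = u0 then Jh f else 0) *\<^sub>R u)"
    unfolding vecJ_def
  proof (intro sum.cong refl)
    fix u :: 'a assume u: "u \<in> Basis"
    show "Jh (\<lambda>s. (f s *\<^sub>R u0) \<bullet> u) *\<^sub>R u = (if u = u0 then Jh f else 0) *\<^sub>R u"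
      unfolding inner_scaleR_basis[OF u0 u] by (auto simp: Jh_zero[OF L])
  qed
  then show ?thesis using basis_sum_single[OF u0] by simp
qed

lemma vecI_single:
  fixes u0 :: "'a::euclidean_space"
  assumes L: "linIp kI Ih" and u0: "u0 \<in> Basis" and s: "s \<in> {-1..1}"
  shows "vecI Ih (\<lambda>s. f s *\<^sub>R u0) s = Ih f s *\<^sub>R u0"
proof -
  have "vecI Ih (\<lambda>s. f s *\<^sub>R u0) s = (\<Sum>u\<in>Basis. (if u = u0 then Ih f s else 0) *\<^sub>R u)"
    unfolding vecI_def
  proof (intro sum.cong refl)
    fix u :: 'a assume u: "u \<in> Basis"
    show "Ih (\<lambda>s. (f s *\<^sub>R u0) \<bullet> u) s *\<^sub>R u = (if u = u0 then Ih f s else 0) *\<^sub>R u"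
      unfolding inner_scaleR_basis[OF u0 u] by (auto simp: Ih_zero[OF L s])
  qed
  then show ?thesis using basis_sum_single[OF u0] by simp
qed

lemma someBasis: "(SOME u. u \<in> (Basis :: 'a::euclidean_space set)) \<in> Basis"
  by (rule someI_ex) (use nonempty_Basis in blast)

lemma J_scalar:
  fixes dummy :: "'a::euclidean_space"
  assumes A2: "\<exists>C0. \<forall>\<phi>::real \<Rightarrow> 'a. Ck_on kJs {-1..1} \<phi> \<longrightarrow>
               norm (vecJ Jh \<phi>) \<le> C0 * (\<Sum>j\<le>kJs. supn {-1..1} (nderiv {-1..1} j \<phi>))"
    and L: "linJp kJs Jh"
  shows "\<exists>C0\<ge>0. \<forall>f. Ck_on kJs {-1..1} f \<longrightarrow> \<bar>Jh f\<bar> \<le> C0 * (\<Sum>j\<le>kJs. supn {-1..1} (nderiv {-1..1} j f))"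
proof -
  obtain C0 where C0: "\<And>\<phi>::real \<Rightarrow> 'a. Ck_on kJs {-1..1} \<phi> \<Longrightarrow>
               norm (vecJ Jh \<phi>) \<le> C0 * (\<Sum>j\<le>kJs. supn {-1..1} (nderiv {-1..1} j \<phi>))" using A2 by blast
  define u0 :: 'a where "u0 = (SOME u. u \<in> Basis)"
  have u0: "u0 \<in> Basis" unfolding u0_def by (rule someBasis)
  have "\<bar>Jh f\<bar> \<le> \<bar>C0\<bar> * (\<Sum>j\<le>kJs. supn {-1..1} (nderiv {-1..1} j f))" if f: "Ck_on kJs {-1..1} f" for f
  proof -
    have \<phi>: "Ck_on kJs {-1..1} (\<lambda>s. f s *\<^sub>R u0)" using scaleR_Ck(1)[of "-1" 1 kJs f u0] f by simp
    have "norm (vecJ Jh (\<lambda>s. f s *\<^sub>R u0)) = \<bar>Jh f\<bar>" using vecJ_single[OF L u0] u0 by simp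
    moreover have "supn {-1..1} (nderiv {-1..1} j (\<lambda>s. f s *\<^sub>R u0)) = supn {-1..1} (nderiv {-1..1} j f)" if "j \<le> kJs" for j
      by (rule supn_cong) (use scaleR_Ck(2)[of "-1" 1 kJs f j _ u0] f that u0 in auto)
    ultimately have "\<bar>Jh f\<bar> \<le> C0 * (\<Sum>j\<le>kJs. supn {-1..1} (nderiv {-1..1} j f))"
      using C0[OF \<phi>] by simp
    moreover have "0 \<le> (\<Sum>j\<le>kJs. supn {-1..1} (nderiv {-1..1} j f))"
      by (intro sum_nonneg supn_nonneg[of "{-1..1}"] Ck_on_C[OF f]) auto
    ultimately show ?thesis by (meson abs_ge_self mult_right_mono order.trans)
  qed
  then show ?thesis by (intro exI[of _ "\<bar>C0\<bar>"]) auto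
qed

lemma I_scalar:
  fixes dummy :: "'a::euclidean_space"
  assumes A3: "\<exists>C1. \<forall>l\<le>kJs. \<forall>\<phi>::real \<Rightarrow> 'a. Ck_on (max kI l) {-1..1} \<phi> \<longrightarrow>
               supn {-1..1} (nderiv {-1..1} l (vecI Ih \<phi>))
                 \<le> C1 * (\<Sum>j\<le>max kI l. supn {-1..1} (nderiv {-1..1} j \<phi>))"
    and L: "linIp kI Ih" and R: "regIp kI Ih"
  shows "\<exists>C1\<ge>0. \<forall>l\<le>kJs. \<forall>f. Ck_on (max kI l) {-1..1} f \<longrightarrow>
               supn {-1..1} (nderiv {-1..1} l (Ih f)) \<le> C1 * (\<Sum>j\<le>max kI l. supn {-1..1} (nderiv {-1..1} j f))"
proof -
  obtain C1 where C1: "\<And>l \<phi>. l \<le> kJs \<Longrightarrow> Ck_on (max kI l) {-1..1} (\<phi>::real \<Rightarrow> 'a) \<Longrightarrow>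
               supn {-1..1} (nderiv {-1..1} l (vecI Ih \<phi>))
                 \<le> C1 * (\<Sum>j\<le>max kI l. supn {-1..1} (nderiv {-1..1} j \<phi>))" using A3 by blast
  define u0 :: 'a where "u0 = (SOME u. u \<in> Basis)"
  have u0: "u0 \<in> Basis" unfolding u0_def by (rule someBasis)
  have "supn {-1..1} (nderiv {-1..1} l (Ih f)) \<le> \<bar>C1\<bar> * (\<Sum>j\<le>max kI l. supn {-1..1} (nderiv {-1..1} j f))"
    if l: "l \<le> kJs" and f: "Ck_on (max kI l) {-1..1} f" for l f
  proof -
    have \<phi>: "Ck_on (max kI l) {-1..1} (\<lambda>s. f s *\<^sub>R u0)" using scaleR_Ck(1)[of "-1" 1 _ f u0] f by simp
    have If: "Ck_on l {-1..1} (Ih f)" using R f unfolding regIp_def by blast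
    have e1: "\<forall>s\<in>{-1..1}. vecI Ih (\<lambda>s. f s *\<^sub>R u0) s = Ih f s *\<^sub>R u0"
      using vecI_single[OF L u0] by blast
    have "supn {-1..1} (nderiv {-1..1} l (vecI Ih (\<lambda>s. f s *\<^sub>R u0))) = supn {-1..1} (nderiv {-1..1} l (Ih f))"
    proof (rule supn_cong)
      fix s :: real assume s: "s \<in> {-1..1}"
      have "nderiv {-1..1} l (vecI Ih (\<lambda>s. f s *\<^sub>R u0)) s = nderiv {-1..1} l (\<lambda>s. Ih f s *\<^sub>R u0) s"
        by (rule nderiv_cong[OF e1 s])
      also have "\<dots> = nderiv {-1..1} l (Ih f) s *\<^sub>R u0" using scaleR_Ck(2)[of "-1" 1 l "Ih f" l s u0] If s by simp
      finally show "norm (nderiv {-1..1} l (vecI Ih (\<lambda>s. f s *\<^sub>R u0)) s) = norm (nderiv {-1..1} l (Ih f) s)"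
        using u0 by simp
    qed
    moreover have "supn {-1..1} (nderiv {-1..1} j (\<lambda>s. f s *\<^sub>R u0)) = supn {-1..1} (nderiv {-1..1} j f)" if "j \<le> max kI l" for j
      by (rule supn_cong) (use scaleR_Ck(2)[of "-1" 1 "max kI l" f j _ u0] f that u0 in auto)
    ultimately have "supn {-1..1} (nderiv {-1..1} l (Ih f)) \<le> C1 * (\<Sum>j\<le>max kI l. supn {-1..1} (nderiv {-1..1} j f))"
      using C1[OF l \<phi>] by simp
    moreover have "0 \<le> (\<Sum>j\<le>max kI l. supn {-1..1} (nderiv {-1..1} j f))"
      by (intro sum_nonneg supn_nonneg[of "{-1..1}"] Ck_on_C[OF f]) auto
    ultimately show ?thesis by (meson abs_ge_self mult_right_mono order.trans)
  qed
  then show ?thesis by (intro exI[of _ "\<bar>C1\<bar>"]) auto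
qed

lemma J_local:
  assumes L: "linJp kJs Jh"
    and JB: "\<forall>f. Ck_on kJs {-1..1} f \<longrightarrow> \<bar>Jh f\<bar> \<le> C0 * (\<Sum>j\<le>kJs. supn {-1..1} (nderiv {-1..1} j f))"
    and f: "Ck_on kJs {-1..1} f" and g: "Ck_on kJs {-1..1} g" and fg: "\<forall>s\<in>{-1..1}. f s = g s"
  shows "Jh f = Jh g"
proof -
  define d where "d = (\<lambda>s. 1 * f s + (-1) * g s)"
  have dz: "\<forall>s\<in>{-1..1}. d s = 0" using fg unfolding d_def by simp
  have dC: "Ck_on kJs {-1..1} d" by (rule Ck_on_cong[OF _ Ck_const0[of "-1" 1 kJs]]) (use dz in auto)
  have "Jh d = Jh f - Jh g" unfolding d_def using linJ_D[OF L f g, of 1 "-1"] by simp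
  moreover have "supn {-1..1} (nderiv {-1..1} j d) = 0" for j
    by (rule supn_zero) (use nderiv_zero_on[of "-1" 1 d] dz in auto)
  ultimately have "\<bar>Jh f - Jh g\<bar> \<le> 0" using JB dC by (metis (no_types, lifting) mult_zero_right sum.neutral)
  then show ?thesis by simp
qed

lemma I_local:
  assumes L: "linIp kI Ih" and R: "regIp kI Ih"
    and IB: "\<forall>f. Ck_on kI {-1..1} f \<longrightarrow> supn {-1..1} (nderiv {-1..1} 0 (Ih f)) \<le> C1 * (\<Sum>j\<le>kI. supn {-1..1} (nderiv {-1..1} j f))"
    and f: "Ck_on kI {-1..1} f" and g: "Ck_on kI {-1..1} g" and fg: "\<forall>s\<in>{-1..1}. f s = g s"
    and s: "s \<in> {-1..1}"
  shows "Ih f s = Ih g s"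
proof -
  define d where "d = (\<lambda>s. 1 * f s + (-1) * g s)"
  have dz: "\<forall>s\<in>{-1..1}. d s = 0" using fg unfolding d_def by simp
  have dC: "Ck_on kI {-1..1} d" by (rule Ck_on_cong[OF _ Ck_const0[of "-1" 1 kI]]) (use dz in auto)
  have "Ih d s = Ih f s - Ih g s" unfolding d_def using linI_D[OF L f g s, of 1 "-1"] by simp
  moreover have "supn {-1..1} (nderiv {-1..1} j d) = 0" for j
    by (rule supn_zero) (use nderiv_zero_on[of "-1" 1 d] dz in auto)
  moreover have "supn {-1..1} (Ih d) \<le> C1 * (\<Sum>j\<le>kI. supn {-1..1} (nderiv {-1..1} j d))" using IB dC by simp
  ultimately have sup0: "supn {-1..1} (Ih d) \<le> 0" by simp
  have "Ck_on 0 {-1..1} (Ih d)" using R dC unfolding regIp_def by (metis max_0R)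
  then have "continuous_on {-1..1} (Ih d)" using Ck_on_C[of 0 _ "Ih d" 0] by simp
  then have "norm (Ih d s) \<le> supn {-1..1} (Ih d)" using supn_upper[of "{-1..1}" "Ih d" "{-1..1}" s] s by simp
  then have "\<bar>Ih f s - Ih g s\<bar> \<le> 0" using sup0 \<open>Ih d s = _\<close> by simp
  then show ?thesis by simp
qed

lemma xpow_Ck:
  assumes g: "Ck_on n {-1..1} g"
  shows "Ck_on n {-1..1} (\<lambda>s. s^m * g s)"
proof (induction m)
  case 0
  then show ?case using g by simp
next
  case (Suc m)
  have "Ck_on n {-1..1} (\<lambda>x. x * (x^m * g x))" using xmul_Ck(1)[OF _ Suc] by simp
  then show ?case by (simp add: mult.assoc)
qed

lemma supn_nonneg_Ck:
  assumes "Ck_on n {-1..1} g" "j \<le> n"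
  shows "0 \<le> supn {-1..1::real} (nderiv {-1..1} j g)"
  by (rule supn_nonneg[OF Ck_on_C[OF assms]]) auto

lemma xpow_bound:
  fixes g :: "real \<Rightarrow> real"
  assumes g: "Ck_on n {-1..1} g"
  shows "\<forall>j x. j \<le> n \<longrightarrow> x \<in> {-1..1} \<longrightarrow>
     \<bar>nderiv {-1..1} j (\<lambda>s. s^m * g s) x\<bar> \<le> real (j+1)^m * (\<Sum>i\<le>j. supn {-1..1} (nderiv {-1..1} i g))"
proof (induction m)
  case 0
  show ?case
  proof (intro allI impI)
    fix j x assume j: "j \<le> n" and x: "x \<in> {-1..1::real}"
    have "\<bar>nderiv {-1..1} j g x\<bar> \<le> supn {-1..1} (nderiv {-1..1} j g)"
      using supn_upper[OF Ck_on_C[OF g j], of "{-1..1}" x] x by simp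
    also have "\<dots> \<le> (\<Sum>i\<le>j. supn {-1..1} (nderiv {-1..1} i g))"
      by (rule member_le_sum) (use supn_nonneg_Ck[OF g] j in auto)
    finally show "\<bar>nderiv {-1..1} j (\<lambda>s. s^0 * g s) x\<bar> \<le> real (j+1)^0 * (\<Sum>i\<le>j. supn {-1..1} (nderiv {-1..1} i g))"
      by simp
  qed
next
  case (Suc m)
  define G where "G = (\<lambda>s::real. s^m * g s)"
  have GC: "Ck_on n {-1..1} G" unfolding G_def by (rule xpow_Ck[OF g])
  define M where "M = (\<lambda>j. \<Sum>i\<le>j. supn {-1..1} (nderiv {-1..1} i g))"
  have Mmono: "M i \<le> M j" if "i \<le> j" "j \<le> n" for i j
    unfolding M_def by (rule sum_mono2) (use that supn_nonneg_Ck[OF g] in auto)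
  have M0: "0 \<le> M j" if "j \<le> n" for j
    unfolding M_def by (rule sum_nonneg) (use that supn_nonneg_Ck[OF g] in auto)
  show ?case
  proof (intro allI impI)
    fix j x assume j: "j \<le> n" and x: "x \<in> {-1..1::real}"
    have e: "(\<lambda>s. s^Suc m * g s) = (\<lambda>s. s * G s)" unfolding G_def by (auto simp: mult.assoc)
    have "nderiv {-1..1} j (\<lambda>s. s * G s) x = x * nderiv {-1..1} j G x + of_nat j * nderiv {-1..1} (j - 1) G x"
      using xmul_Ck(2)[OF _ GC j x] by simp
    moreover have h1: "\<bar>nderiv {-1..1} j G x\<bar> \<le> real (j+1)^m * M j" using Suc j x unfolding G_def M_def by blast
    moreover have h2: "of_nat j * \<bar>nderiv {-1..1} (j - 1) G x\<bar> \<le> of_nat j * (real (j+1)^m * M j)"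
    proof (cases j)
      case (Suc j')
      have j1: "j - 1 \<le> n" using j by simp
      have "\<bar>nderiv {-1..1} (j - 1) G x\<bar> \<le> real (j - 1 + 1)^m * M (j - 1)"
        using Suc.IH[rule_format, OF j1 x] unfolding G_def M_def .
      also have "\<dots> \<le> real (j+1)^m * M j"
      proof (rule mult_mono)
        show "real (j - 1 + 1)^m \<le> real (j+1)^m" by (intro power_mono) auto
        show "M (j - 1) \<le> M j" by (rule Mmono) (use j in auto)
        show "0 \<le> real (j+1)^m" by simp
        show "0 \<le> M (j - 1)" by (rule M0[OF j1])
      qed
      finally show ?thesis by (intro mult_left_mono) auto
    qed simp
    moreover have "\<bar>x\<bar> \<le> 1" using x by auto
    ultimately have "\<bar>nderiv {-1..1} j (\<lambda>s. s * G s) x\<bar> \<le> real (j+1)^m * M j + of_nat j * (real (j+1)^m * M j)"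
    proof -
      assume eq: "nderiv {-1..1} j (\<lambda>s. s * G s) x = x * nderiv {-1..1} j G x + of_nat j * nderiv {-1..1} (j - 1) G x"
        and a1: "\<bar>nderiv {-1..1} j G x\<bar> \<le> real (j+1)^m * M j"
        and a2: "of_nat j * \<bar>nderiv {-1..1} (j - 1) G x\<bar> \<le> of_nat j * (real (j+1)^m * M j)"
        and xx: "\<bar>x\<bar> \<le> 1"
      have "\<bar>x * nderiv {-1..1} j G x\<bar> \<le> \<bar>nderiv {-1..1} j G x\<bar>"
        using xx by (simp add: abs_mult mult_left_le_one_le)
      moreover have "\<bar>of_nat j * nderiv {-1..1} (j - 1) G x\<bar> = of_nat j * \<bar>nderiv {-1..1} (j - 1) G x\<bar>"
        by (simp add: abs_mult)
      ultimately show ?thesis unfolding eq using a1 a2 abs_triangle_ineq[of "x * nderiv {-1..1} j G x" "of_nat j * nderiv {-1..1} (j - 1) G x"]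
        by linarith
    qed
    also have "\<dots> = real (j+1)^Suc m * M j" by (simp add: algebra_simps)
    finally show "\<bar>nderiv {-1..1} j (\<lambda>s. s^Suc m * g s) x\<bar> \<le> real (j+1)^Suc m * (\<Sum>i\<le>j. supn {-1..1} (nderiv {-1..1} i g))"
      unfolding e M_def .
  qed
qed

lemma rowJ_bound:
  assumes JB: "\<forall>f. Ck_on kJs {-1..1} f \<longrightarrow> \<bar>Jh f\<bar> \<le> C0 * (\<Sum>j\<le>kJs. supn {-1..1} (nderiv {-1..1} j f))"
    and C0: "0 \<le> C0"
    and IB: "\<forall>l\<le>kJs. \<forall>f. Ck_on (max kI l) {-1..1} f \<longrightarrow>
               supn {-1..1} (nderiv {-1..1} l (Ih f)) \<le> C1 * (\<Sum>j\<le>max kI l. supn {-1..1} (nderiv {-1..1} j f))"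
    and C1: "0 \<le> C1"
    and R: "regIp kI Ih" and w: "Ck_on K {-1..1} w" and KK: "max kI kJs \<le> K"
  shows "\<bar>Jh (\<lambda>s. s^m * Ih w s)\<bar> \<le> C0 * real (kJs+1)^(m+2) * C1 * (\<Sum>j\<le>K. supn {-1..1} (nderiv {-1..1} j w))"
proof -
  define W where "W = (\<Sum>j\<le>K. supn {-1..1} (nderiv {-1..1} j w))"
  have W0: "0 \<le> W" unfolding W_def by (intro sum_nonneg supn_nonneg_Ck[OF w]) auto
  have IwC: "Ck_on kJs {-1..1} (Ih w)"
    using R Ck_on_mono[OF _ w, of "max kI kJs"] KK unfolding regIp_def by blast
  have X: "supn {-1..1} (nderiv {-1..1} i (Ih w)) \<le> C1 * W" if i: "i \<le> kJs" for i
  proof -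
    have wi: "Ck_on (max kI i) {-1..1} w" by (rule Ck_on_mono[OF _ w]) (use i KK in auto)
    have "supn {-1..1} (nderiv {-1..1} i (Ih w)) \<le> C1 * (\<Sum>j\<le>max kI i. supn {-1..1} (nderiv {-1..1} j w))"
      using IB i wi by blast
    also have "\<dots> \<le> C1 * W" unfolding W_def
      by (intro mult_left_mono C1 sum_mono2) (use i KK supn_nonneg_Ck[OF w] in auto)
    finally show ?thesis .
  qed
  have F: "Ck_on kJs {-1..1} (\<lambda>s. s^m * Ih w s)" by (rule xpow_Ck[OF IwC])
  have Y: "supn {-1..1} (nderiv {-1..1} j (\<lambda>s. s^m * Ih w s)) \<le> real (kJs+1)^(m+1) * (C1 * W)" if j: "j \<le> kJs" for j
  proof -
    have "(\<Sum>i\<le>j. supn {-1..1} (nderiv {-1..1} i (Ih w))) \<le> (\<Sum>i\<le>j. C1 * W)"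
      by (rule sum_mono) (use X j in auto)
    also have "\<dots> = real (j+1) * (C1 * W)" by simp
    finally have s: "(\<Sum>i\<le>j. supn {-1..1} (nderiv {-1..1} i (Ih w))) \<le> real (j+1) * (C1 * W)" .
    have "supn {-1..1} (nderiv {-1..1} j (\<lambda>s. s^m * Ih w s)) \<le> real (j+1)^m * (\<Sum>i\<le>j. supn {-1..1} (nderiv {-1..1} i (Ih w)))"
      by (rule supn_le) (use xpow_bound[OF IwC, of m] j in auto)
    also have "\<dots> \<le> real (j+1)^m * (real (j+1) * (C1 * W))" by (rule mult_left_mono[OF s]) simp
    also have "\<dots> = real (j+1)^(m+1) * (C1 * W)" by simp
    also have "\<dots> \<le> real (kJs+1)^(m+1) * (C1 * W)"
      by (intro mult_right_mono power_mono) (use j C1 W0 in auto)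
    finally show ?thesis .
  qed
  have "\<bar>Jh (\<lambda>s. s^m * Ih w s)\<bar> \<le> C0 * (\<Sum>j\<le>kJs. supn {-1..1} (nderiv {-1..1} j (\<lambda>s. s^m * Ih w s)))"
    using JB F by blast
  also have "\<dots> \<le> C0 * (\<Sum>j\<le>kJs. real (kJs+1)^(m+1) * (C1 * W))"
    by (intro mult_left_mono C0 sum_mono Y) auto
  also have "\<dots> = C0 * real (kJs+1)^(m+2) * C1 * W" by (simp add: algebra_simps)
  finally show ?thesis unfolding W_def .
qed

lemma vpolys_Ck:
  fixes p :: "real \<Rightarrow> 'a::euclidean_space"
  assumes "p \<in> vpolys n" "c < d"
  shows "Ck_on N {c..d} p"
proof -
  obtain cv where cv: "\<forall>x. p x = (\<Sum>i\<le>n. (x ^ i) *\<^sub>R cv i)" using assms(1) unfolding vpolys_def by blast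
  have e: "p = (\<lambda>x. \<Sum>i\<le>n. poly (monom 1 i) x *\<^sub>R cv i)" using cv by (auto simp: poly_monom)
  show ?thesis unfolding e by (rule lincomb(1)[OF assms(2)]) (auto intro: Ck_poly[OF assms(2)])
qed

lemma vpolys_inner_poly:
  fixes p :: "real \<Rightarrow> 'a::euclidean_space"
  assumes "p \<in> vpolys n"
  shows "\<exists>P. degree P \<le> n \<and> (\<forall>x. poly P x = p x \<bullet> u)"
proof -
  obtain cv where cv: "\<forall>x. p x = (\<Sum>i\<le>n. (x ^ i) *\<^sub>R cv i)" using assms(1) unfolding vpolys_def by blast
  define P where "P = (\<Sum>i\<le>n. monom (cv i \<bullet> u) i)"
  have "degree P \<le> n" unfolding P_def
    by (intro degree_sum_le) (auto intro: order.trans[OF degree_monom_le])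
  moreover have "poly P x = p x \<bullet> u" for x
    unfolding P_def using cv by (simp add: poly_sum poly_monom inner_sum_left mult.commute)
  ultimately show ?thesis by blast
qed

lemma vpolys_Q:
  fixes p :: "real \<Rightarrow> 'a::euclidean_space"
  assumes "p \<in> vpolys n"
  shows "\<exists>Q. degree Q \<le> n \<and> (\<forall>s. poly Q s = p (Tmap a b s) \<bullet> u)"
proof -
  obtain P where P: "degree P \<le> n" "\<forall>x. poly P x = p x \<bullet> u" using vpolys_inner_poly[OF assms] by blast
  define Q where "Q = pcompose P [:(a+b)/2, (b-a)/2:]"
  have "degree Q \<le> degree P * degree [:(a+b)/2, (b-a)/2:]" unfolding Q_def by (simp add: degree_pcompose)
  also have "\<dots> \<le> degree P * 1" by (intro mult_left_mono) auto
  finally have "degree Q \<le> n" using P(1) by simp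
  moreover have "poly Q s = p (Tmap a b s) \<bullet> u" for s
    unfolding Q_def poly_pcompose Tmap_def using P(2) by (simp add: algebra_simps)
  ultimately show ?thesis by blast
qed

lemma sum_poly_vpolys:
  fixes R :: "'a::euclidean_space \<Rightarrow> real poly" and cv :: "'a \<Rightarrow> 'b::real_vector"
  assumes "finite U" "\<forall>u\<in>U. degree (R u) \<le> n"
  shows "(\<lambda>x. \<Sum>u\<in>U. poly (R u) x *\<^sub>R cv u) \<in> vpolys n"
proof -
  have "(\<Sum>u\<in>U. poly (R u) x *\<^sub>R cv u) = (\<Sum>i\<le>n. (x ^ i) *\<^sub>R (\<Sum>u\<in>U. coeff (R u) i *\<^sub>R cv u))" for x
  proof -
    have "(\<Sum>u\<in>U. poly (R u) x *\<^sub>R cv u) = (\<Sum>u\<in>U. (\<Sum>i\<le>n. coeff (R u) i * x^i) *\<^sub>R cv u)"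
    proof (intro sum.cong refl)
      fix u assume "u \<in> U"
      then have "poly (R u) x = (\<Sum>i\<le>n. coeff (R u) i * x^i)"
        using assms(2) by (subst poly_as_sum_of_monoms'[symmetric, of "R u" n]) (auto simp: poly_sum poly_monom)
      then show "poly (R u) x *\<^sub>R cv u = (\<Sum>i\<le>n. coeff (R u) i * x^i) *\<^sub>R cv u" by simp
    qed
    also have "\<dots> = (\<Sum>u\<in>U. \<Sum>i\<le>n. (x^i) *\<^sub>R (coeff (R u) i *\<^sub>R cv u))"
      by (simp add: scaleR_sum_left mult.commute)
    also have "\<dots> = (\<Sum>i\<le>n. \<Sum>u\<in>U. (x^i) *\<^sub>R (coeff (R u) i *\<^sub>R cv u))" by (rule sum.swap)
    also have "\<dots> = (\<Sum>i\<le>n. (x ^ i) *\<^sub>R (\<Sum>u\<in>U. coeff (R u) i *\<^sub>R cv u))" by (simp add: scaleR_sum_right)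
    finally show ?thesis .
  qed
  then show ?thesis unfolding vpolys_def mem_Collect_eq
    by (intro exI[of _ "\<lambda>i. \<Sum>u\<in>U. coeff (R u) i *\<^sub>R cv u"]) simp
qed

lemma poly_scaleR_vpolys:
  fixes c :: "'b::real_vector"
  assumes "degree P \<le> n"
  shows "(\<lambda>x. poly P x *\<^sub>R c) \<in> vpolys n"
proof -
  have "poly P x *\<^sub>R c = (\<Sum>i\<le>n. (x ^ i) *\<^sub>R (coeff P i *\<^sub>R c))" for x
  proof -
    have "poly P x = (\<Sum>i\<le>n. coeff P i * x^i)"
      using assms by (subst poly_as_sum_of_monoms'[symmetric, of P n]) (auto simp: poly_sum poly_monom)
    then show ?thesis by (simp add: scaleR_sum_left mult.commute)
  qed
  then show ?thesis unfolding vpolys_def mem_Collect_eq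
    by (intro exI[of _ "\<lambda>i. coeff P i *\<^sub>R c"]) simp
qed

lemma Tinv_poly: "poly [:-(a+b)/(b-a), 2/(b-a):] x = Tinv a b x"
proof -
  have "- (a + b) / (b - a) + x * (2 / (b - a)) = (2 * x - a - b) / (b - (a::real))" by argo
  then show ?thesis unfolding Tinv_def by simp
qed

lemma Tmap_poly: "poly [:(a+b)/2, (b-a)/2:] s = Tmap a b s"
  unfolding Tmap_def by (simp add: algebra_simps)

lemma Tmap_m1: "Tmap a b (-1) = a" and Tmap_1: "Tmap a b 1 = b"
  unfolding Tmap_def by (simp_all add: field_simps)

lemma test_fun_vpolys:
  fixes u0 :: "'a::euclidean_space"
  shows "(\<lambda>x. (Tinv a b x)^m *\<^sub>R u0) \<in> vpolys m"
proof -
  define P where "P = pcompose (monom 1 m) [:-(a+b)/(b-a), 2/(b-a):]"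
  have "degree P \<le> degree (monom (1::real) m) * degree [:-(a+b)/(b-a), 2/(b-a):]" unfolding P_def by (simp add: degree_pcompose)
  also have "\<dots> \<le> m * 1" by (intro mult_mono) (auto simp: degree_monom_le)
  finally have "degree P \<le> m" by simp
  moreover have "poly P x = (Tinv a b x)^m" for x unfolding P_def poly_pcompose Tinv_poly by (simp add: poly_monom)
  ultimately show ?thesis using poly_scaleR_vpolys[of P m u0] by simp
qed

lemma vpolys_mono: "m \<le> n \<Longrightarrow> p \<in> vpolys m \<Longrightarrow> p \<in> vpolys n"
proof -
  assume mn: "m \<le> n" and p: "p \<in> vpolys m"
  obtain cv where cv: "\<forall>x. p x = (\<Sum>i\<le>m. (x ^ i) *\<^sub>R cv i)" using p unfolding vpolys_def by blast
  have "p x = (\<Sum>i\<le>n. (x ^ i) *\<^sub>R (if i \<le> m then cv i else 0))" for x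
  proof -
    have "(\<Sum>i\<le>n. (x ^ i) *\<^sub>R (if i \<le> m then cv i else 0)) = (\<Sum>i\<le>m. (x ^ i) *\<^sub>R (if i \<le> m then cv i else 0))"
      by (rule sum.mono_neutral_right) (use mn in auto)
    also have "\<dots> = (\<Sum>i\<le>m. (x ^ i) *\<^sub>R cv i)" by (intro sum.cong) auto
    finally show ?thesis using cv by simp
  qed
  then show "p \<in> vpolys n" unfolding vpolys_def mem_Collect_eq
    by (intro exI[of _ "\<lambda>i. if i \<le> m then cv i else 0"]) simp
qed

lemma Jh_sum:
  fixes c :: "'i \<Rightarrow> real"
  assumes L: "linJp kJs Jh" and I: "finite I" and f: "\<And>i. i \<in> I \<Longrightarrow> Ck_on kJs {-1..1} (f i)"
  shows "Jh (\<lambda>s. \<Sum>i\<in>I. c i * f i s) = (\<Sum>i\<in>I. c i * Jh (f i))"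
  using I f
proof (induction I rule: finite_induct)
  case empty
  then show ?case using Jh_zero[OF L] by simp
next
  case (insert x F)
  have FC: "Ck_on kJs {-1..1} (\<lambda>s. \<Sum>i\<in>F. c i * f i s)"
    by (rule sum_Ck) (use insert in auto)
  have "Jh (\<lambda>s. c x * f x s + 1 * (\<Sum>i\<in>F. c i * f i s)) = c x * Jh (f x) + 1 * Jh (\<lambda>s. \<Sum>i\<in>F. c i * f i s)"
    by (rule linJ_D[OF L]) (use insert FC in auto)
  then show ?case using insert by simp
qed

lemma Jh_sum2:
  fixes c :: "'u \<Rightarrow> 'm \<Rightarrow> real"
  assumes L: "linJp kJs Jh" and U: "finite U" and M: "finite M"
    and f: "\<And>u m. u \<in> U \<Longrightarrow> m \<in> M \<Longrightarrow> Ck_on kJs {-1..1} (f u m)"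
  shows "Jh (\<lambda>s. \<Sum>u\<in>U. \<Sum>m\<in>M. c u m * f u m s) = (\<Sum>u\<in>U. \<Sum>m\<in>M. c u m * Jh (f u m))"
proof -
  have "Jh (\<lambda>s. \<Sum>u\<in>U. 1 * (\<Sum>m\<in>M. c u m * f u m s)) = (\<Sum>u\<in>U. 1 * Jh (\<lambda>s. \<Sum>m\<in>M. c u m * f u m s))"
    by (rule Jh_sum[OF L U]) (rule sum_Ck, use M f in auto)
  also have "\<dots> = (\<Sum>u\<in>U. \<Sum>m\<in>M. c u m * Jh (f u m))"
    by (intro sum.cong refl) (use Jh_sum[OF L M] f in auto)
  finally show ?thesis by simp
qed

lemma sum2_Ck:
  fixes c :: "'u \<Rightarrow> 'm \<Rightarrow> real"
  assumes U: "finite U" and M: "finite M"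
    and f: "\<And>u m. u \<in> U \<Longrightarrow> m \<in> M \<Longrightarrow> Ck_on n {-1..1} (f u m)"
  shows "Ck_on n {-1..1} (\<lambda>s. \<Sum>u\<in>U. \<Sum>m\<in>M. c u m * f u m s)"
proof -
  have "Ck_on n {-1..1} (\<lambda>s. \<Sum>u\<in>U. 1 * (\<Sum>m\<in>M. c u m * f u m s))"
  proof (rule sum_Ck[OF _ U])
    fix u assume u: "u \<in> U"
    show "Ck_on n {-1..1} (\<lambda>s. \<Sum>m\<in>M. c u m * f u m s)" by (rule sum_Ck[OF _ M]) (use f u in auto)
  qed simp
  then show ?thesis by simp
qed

lemma cmul_Ck:
  fixes f :: "real \<Rightarrow> real"
  assumes "Ck_on n {-1..1} f"
  shows "Ck_on n {-1..1} (\<lambda>x. c * f x)"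
  using sum_Ck[of "-1" 1 "{0::nat}" n "\<lambda>_. f" "\<lambda>_. c"] assms by simp

lemma vecI_inner:
  fixes F :: "real \<Rightarrow> 'a::euclidean_space"
  assumes u: "u \<in> Basis"
  shows "vecI Ih F s \<bullet> u = Ih (\<lambda>x. F x \<bullet> u) s"
proof -
  have "vecI Ih F s \<bullet> u = (\<Sum>u'\<in>Basis. Ih (\<lambda>x. F x \<bullet> u') s * (u' \<bullet> u))"
    unfolding vecI_def by (simp add: inner_sum_left)
  also have "\<dots> = (\<Sum>u'\<in>Basis. if u' = u then Ih (\<lambda>x. F x \<bullet> u) s else 0)"
    by (intro sum.cong refl) (use u in \<open>auto simp: inner_Basis\<close>)
  also have "\<dots> = Ih (\<lambda>x. F x \<bullet> u) s" using u by simp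
  finally show ?thesis .
qed

lemma LHS_expand:
  fixes p \<phi> :: "real \<Rightarrow> 'a::euclidean_space" and Q :: "'a \<Rightarrow> real poly"
  assumes ab: "a < b" and pv: "p \<in> vpolys r"
    and Q: "\<forall>u\<in>Basis. \<forall>s. poly (Q u) s = p (Tmap a b s) \<bullet> u"
    and d: "\<forall>u\<in>Basis. \<forall>s. \<phi> (Tmap a b s) \<bullet> u = (\<Sum>m\<le>n. d u m * s^m)"
    and L: "linJp kJs Jh"
    and JB: "\<forall>f. Ck_on kJs {-1..1} f \<longrightarrow> \<bar>Jh f\<bar> \<le> C0 * (\<Sum>j\<le>kJs. supn {-1..1} (nderiv {-1..1} j f))"
  shows "locJ Jh a b (\<lambda>x. nderiv {a..b} 1 p x \<bullet> \<phi> x) + (if k = 0 then p a \<bullet> \<phi> a else 0)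
       = (\<Sum>u\<in>Basis. \<Sum>m\<le>n. d u m * (Jh (\<lambda>s. s^m * poly (pderiv (Q u)) s) + (if k = 0 then poly (Q u) (-1) * (-1)^m else 0)))"
proof -
  define h where "h = (b - a) / 2"
  have h0: "h > 0" using ab unfolding h_def by simp
  have pC: "Ck_on 1 {a..b} p" by (rule vpolys_Ck[OF pv ab])
  have der: "nderiv {a..b} 1 p (Tmap a b s) \<bullet> u = poly (pderiv (Q u)) s / h" if u: "u \<in> Basis" and s: "s \<in> {-1..1}" for u s
  proof -
    have e1: "nderiv {-1..1} 1 (\<lambda>s. p (Tmap a b s)) s = h *\<^sub>R nderiv {a..b} 1 p (Tmap a b s)"
      using affine_Ck(2)[OF ab pC, of 1 s] s unfolding h_def by simp
    have e2: "nderiv {-1..1} 1 (\<lambda>s. p (Tmap a b s) \<bullet> u) s = nderiv {-1..1} 1 (\<lambda>s. p (Tmap a b s)) s \<bullet> u"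
      using inner_Ck(2)[of "-1" 1 1 "\<lambda>s. p (Tmap a b s)" 1 s u] affine_Ck(1)[OF ab pC] s by simp
    have e3: "(\<lambda>s. p (Tmap a b s) \<bullet> u) = poly (Q u)" using Q u by auto
    have e4: "nderiv {-1..1} 1 (poly (Q u)) s = poly (pderiv (Q u)) s" using nderiv_poly[of "-1" 1 s 1 "Q u"] s by simp
    have "h * (nderiv {a..b} 1 p (Tmap a b s) \<bullet> u) = poly (pderiv (Q u)) s"
      using e1 e2 e3 e4 by simp
    then show ?thesis using h0 by (simp add: field_simps)
  qed
  define fL where "fL = (\<lambda>s. nderiv {a..b} 1 p (Tmap a b s) \<bullet> \<phi> (Tmap a b s))"
  define fR where "fR = (\<lambda>s. \<Sum>u\<in>Basis. \<Sum>m\<le>n. (d u m / h) * (s^m * poly (pderiv (Q u)) s))"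
  have eqLR: "\<forall>s\<in>{-1..1}. fR s = fL s"
  proof
    fix s :: real assume s: "s \<in> {-1..1}"
    have "fL s = (\<Sum>u\<in>Basis. (nderiv {a..b} 1 p (Tmap a b s) \<bullet> u) * (\<phi> (Tmap a b s) \<bullet> u))"
      unfolding fL_def by (rule euclidean_inner)
    also have "\<dots> = (\<Sum>u\<in>Basis. (poly (pderiv (Q u)) s / h) * (\<Sum>m\<le>n. d u m * s^m))"
      by (intro sum.cong refl) (use der s d in auto)
    also have "\<dots> = fR s" unfolding fR_def by (simp add: sum_distrib_left algebra_simps)
    finally show "fR s = fL s" by simp
  qed
  have mC: "Ck_on kJs {-1..1} (\<lambda>s. s^m * poly (pderiv (Q u)) s)" for m u
  proof -
    have "(\<lambda>s. s^m * poly (pderiv (Q u)) s) = poly (monom 1 m * pderiv (Q u))" by (auto simp: poly_monom)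
    then show ?thesis using Ck_poly[of "-1" 1 kJs "monom 1 m * pderiv (Q u)"] by simp
  qed
  have fRC: "Ck_on kJs {-1..1} fR" unfolding fR_def by (rule sum2_Ck) (use mC in auto)
  have fLC: "Ck_on kJs {-1..1} fL" by (rule Ck_on_cong[OF eqLR fRC])
  have JLR: "Jh fL = Jh fR" using J_local[OF L JB fLC fRC] eqLR by simp
  have JR: "Jh fR = (\<Sum>u\<in>Basis. \<Sum>m\<le>n. (d u m / h) * Jh (\<lambda>s. s^m * poly (pderiv (Q u)) s))"
    unfolding fR_def by (rule Jh_sum2[OF L]) (use mC in auto)
  have loc: "locJ Jh a b (\<lambda>x. nderiv {a..b} 1 p x \<bullet> \<phi> x) = (\<Sum>u\<in>Basis. \<Sum>m\<le>n. d u m * Jh (\<lambda>s. s^m * poly (pderiv (Q u)) s))"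
  proof -
    have "locJ Jh a b (\<lambda>x. nderiv {a..b} 1 p x \<bullet> \<phi> x) = h * Jh fL"
      unfolding locJ_def fL_def h_def by (simp add: o_def)
    also have "\<dots> = (\<Sum>u\<in>Basis. \<Sum>m\<le>n. h * ((d u m / h) * Jh (\<lambda>s. s^m * poly (pderiv (Q u)) s)))"
      unfolding JLR JR by (simp add: sum_distrib_left)
    also have "\<dots> = (\<Sum>u\<in>Basis. \<Sum>m\<le>n. d u m * Jh (\<lambda>s. s^m * poly (pderiv (Q u)) s))"
      using h0 by simp
    finally show ?thesis .
  qed
  have dl: "p a \<bullet> \<phi> a = (\<Sum>u\<in>Basis. \<Sum>m\<le>n. d u m * (poly (Q u) (-1) * (-1)^m))"
  proof -
    have "p a \<bullet> \<phi> a = (\<Sum>u\<in>Basis. (p (Tmap a b (-1)) \<bullet> u) * (\<phi> (Tmap a b (-1)) \<bullet> u))"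
      unfolding Tmap_m1 by (rule euclidean_inner)
    also have "\<dots> = (\<Sum>u\<in>Basis. poly (Q u) (-1) * (\<Sum>m\<le>n. d u m * (-1)^m))"
      by (intro sum.cong refl) (use Q d in auto)
    finally show ?thesis by (simp add: sum_distrib_left algebra_simps)
  qed
  show ?thesis unfolding loc dl
    by (cases "k = 0") (simp_all add: algebra_simps sum.distrib)
qed

lemma RHS_expand:
  fixes v \<phi> :: "real \<Rightarrow> 'a::euclidean_space"
  assumes ab: "a < b" and vC: "Ck_on (K+1) {a..b} v" and KK: "max kI kJs \<le> K"
    and d: "\<forall>u\<in>Basis. \<forall>s. \<phi> (Tmap a b s) \<bullet> u = (\<Sum>m\<le>n. d u m * s^m)"
    and L: "linJp kJs Jh"
    and JB: "\<forall>f. Ck_on kJs {-1..1} f \<longrightarrow> \<bar>Jh f\<bar> \<le> C0 * (\<Sum>j\<le>kJs. supn {-1..1} (nderiv {-1..1} j f))"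
    and LI: "linIp kI Ih" and R: "regIp kI Ih"
    and IB0: "\<forall>f. Ck_on kI {-1..1} f \<longrightarrow> supn {-1..1} (nderiv {-1..1} 0 (Ih f)) \<le> C1 * (\<Sum>j\<le>kI. supn {-1..1} (nderiv {-1..1} j f))"
  shows "locJ Jh a b (\<lambda>x. locI Ih a b (nderiv {a..b} 1 v) x \<bullet> \<phi> x) + (if k = 0 then v a \<bullet> \<phi> a else 0)
       = (\<Sum>u\<in>Basis. \<Sum>m\<le>n. d u m * (Jh (\<lambda>s. s^m * Ih (nderiv {-1..1} 1 (\<lambda>s. v (Tmap a b s) \<bullet> u)) s)
              + (if k = 0 then (v (Tmap a b (-1)) \<bullet> u) * (-1)^m else 0)))"
proof -
  define h where "h = (b - a) / 2"
  have h0: "h > 0" using ab unfolding h_def by simp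
  define w where "w = (\<lambda>u. nderiv {-1..1} 1 (\<lambda>s. v (Tmap a b s) \<bullet> u))"
  have vT: "Ck_on (K+1) {-1..1} (\<lambda>s. v (Tmap a b s))" by (rule affine_Ck(1)[OF ab vC])
  have vhC: "Ck_on (K+1) {-1..1} (\<lambda>s. v (Tmap a b s) \<bullet> u)" for u by (rule inner_Ck(1)[OF _ vT]) simp
  have wC: "Ck_on K {-1..1} (w u)" for u unfolding w_def by (rule Ck_on_Suc) (use vhC[of u] in simp)
  have v'C: "Ck_on K {a..b} (nderiv {a..b} 1 v)" by (rule Ck_on_Suc) (use vC in simp)
  have gC: "Ck_on K {-1..1} (\<lambda>x. nderiv {a..b} 1 v (Tmap a b x) \<bullet> u)" for u
    by (rule inner_Ck(1)[OF _ affine_Ck(1)[OF ab v'C]]) simp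
  have wg: "w u x = h * (nderiv {a..b} 1 v (Tmap a b x) \<bullet> u)" if x: "x \<in> {-1..1}" for u x
  proof -
    have "w u x = nderiv {-1..1} 1 (\<lambda>s. v (Tmap a b s)) x \<bullet> u"
      unfolding w_def using inner_Ck(2)[OF _ vT, of 1 x u] x by simp
    also have "\<dots> = h * (nderiv {a..b} 1 v (Tmap a b x) \<bullet> u)"
      using affine_Ck(2)[OF ab vC, of 1 x] x unfolding h_def by simp
    finally show ?thesis .
  qed
  have IhC: "Ck_on kJs {-1..1} (Ih (w u))" for u
    using R Ck_on_mono[OF _ wC, of "max kI kJs" u] KK unfolding regIp_def by blast
  have Ig: "Ih (\<lambda>x. nderiv {a..b} 1 v (Tmap a b x) \<bullet> u) s = Ih (w u) s / h" if s: "s \<in> {-1..1}" for u s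
  proof -
    have "Ih (\<lambda>x. nderiv {a..b} 1 v (Tmap a b x) \<bullet> u) s = Ih (\<lambda>x. (1/h) * w u x) s"
    proof (rule I_local[OF LI R IB0 _ _ _ s])
      show "Ck_on kI {-1..1} (\<lambda>x. nderiv {a..b} 1 v (Tmap a b x) \<bullet> u)" by (rule Ck_on_mono[OF _ gC]) (use KK in auto)
      show "Ck_on kI {-1..1} (\<lambda>x. 1 / h * w u x)" by (rule cmul_Ck, rule Ck_on_mono[OF _ wC]) (use KK in auto)
      show "\<forall>s\<in>{-1..1}. nderiv {a..b} 1 v (Tmap a b s) \<bullet> u = 1 / h * w u s" using wg h0 by auto
    qed
    also have "\<dots> = (1/h) * Ih (w u) s" by (rule Ih_scale[OF LI _ s]) (rule Ck_on_mono[OF _ wC], use KK in auto)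
    finally show ?thesis by simp
  qed
  have locI_eq: "locI Ih a b (nderiv {a..b} 1 v) (Tmap a b s) \<bullet> u = Ih (w u) s / h" if u: "u \<in> Basis" and s: "s \<in> {-1..1}" for u s
  proof -
    have "locI Ih a b (nderiv {a..b} 1 v) (Tmap a b s) = vecI Ih (nderiv {a..b} 1 v \<circ> Tmap a b) s"
      unfolding locI_def using Tinv_Tmap[OF ab] by simp
    then have "locI Ih a b (nderiv {a..b} 1 v) (Tmap a b s) \<bullet> u = Ih (\<lambda>x. nderiv {a..b} 1 v (Tmap a b x) \<bullet> u) s"
      using vecI_inner[OF u] by (simp add: o_def)
    then show ?thesis using Ig[OF s] by simp
  qed
  define fL where "fL = (\<lambda>s. locI Ih a b (nderiv {a..b} 1 v) (Tmap a b s) \<bullet> \<phi> (Tmap a b s))"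
  define fR where "fR = (\<lambda>s. \<Sum>u\<in>Basis. \<Sum>m\<le>n. (d u m / h) * (s^m * Ih (w u) s))"
  have eqLR: "\<forall>s\<in>{-1..1}. fR s = fL s"
  proof
    fix s :: real assume s: "s \<in> {-1..1}"
    have "fL s = (\<Sum>u\<in>Basis. (locI Ih a b (nderiv {a..b} 1 v) (Tmap a b s) \<bullet> u) * (\<phi> (Tmap a b s) \<bullet> u))"
      unfolding fL_def by (rule euclidean_inner)
    also have "\<dots> = (\<Sum>u\<in>Basis. (Ih (w u) s / h) * (\<Sum>m\<le>n. d u m * s^m))"
      by (intro sum.cong refl) (use locI_eq s d in auto)
    also have "\<dots> = fR s" unfolding fR_def by (simp add: sum_distrib_left algebra_simps)
    finally show "fR s = fL s" by simp
  qed
  have mC: "Ck_on kJs {-1..1} (\<lambda>s. s^m * Ih (w u) s)" for m u by (rule xpow_Ck[OF IhC])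
  have fRC: "Ck_on kJs {-1..1} fR" unfolding fR_def by (rule sum2_Ck) (use mC in auto)
  have fLC: "Ck_on kJs {-1..1} fL" by (rule Ck_on_cong[OF eqLR fRC])
  have JLR: "Jh fL = Jh fR" using J_local[OF L JB fLC fRC] eqLR by simp
  have JR: "Jh fR = (\<Sum>u\<in>Basis. \<Sum>m\<le>n. (d u m / h) * Jh (\<lambda>s. s^m * Ih (w u) s))"
    unfolding fR_def by (rule Jh_sum2[OF L]) (use mC in auto)
  have loc: "locJ Jh a b (\<lambda>x. locI Ih a b (nderiv {a..b} 1 v) x \<bullet> \<phi> x) = (\<Sum>u\<in>Basis. \<Sum>m\<le>n. d u m * Jh (\<lambda>s. s^m * Ih (w u) s))"
  proof -
    have "locJ Jh a b (\<lambda>x. locI Ih a b (nderiv {a..b} 1 v) x \<bullet> \<phi> x) = h * Jh fL"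
      unfolding locJ_def fL_def h_def by (simp add: o_def)
    also have "\<dots> = (\<Sum>u\<in>Basis. \<Sum>m\<le>n. h * ((d u m / h) * Jh (\<lambda>s. s^m * Ih (w u) s)))"
      unfolding JLR JR by (simp add: sum_distrib_left)
    also have "\<dots> = (\<Sum>u\<in>Basis. \<Sum>m\<le>n. d u m * Jh (\<lambda>s. s^m * Ih (w u) s))"
      using h0 by simp
    finally show ?thesis .
  qed
  have dl: "v a \<bullet> \<phi> a = (\<Sum>u\<in>Basis. \<Sum>m\<le>n. d u m * ((v (Tmap a b (-1)) \<bullet> u) * (-1)^m))"
  proof -
    have "v a \<bullet> \<phi> a = (\<Sum>u\<in>Basis. (v (Tmap a b (-1)) \<bullet> u) * (\<phi> (Tmap a b (-1)) \<bullet> u))"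
      unfolding Tmap_m1 by (rule euclidean_inner)
    also have "\<dots> = (\<Sum>u\<in>Basis. (v (Tmap a b (-1)) \<bullet> u) * (\<Sum>m\<le>n. d u m * (-1)^m))"
      by (intro sum.cong refl) (use d in auto)
    finally show ?thesis by (simp add: sum_distrib_left algebra_simps)
  qed
  show ?thesis unfolding loc dl w_def
    by (cases "k = 0") (simp_all add: algebra_simps sum.distrib)
qed

definition betaV :: "nat \<Rightarrow> ((real\<Rightarrow>real)\<Rightarrow>real) \<Rightarrow> ((real \<Rightarrow> real) \<Rightarrow> real \<Rightarrow> real) \<Rightarrow> real \<Rightarrow> real
     \<Rightarrow> (real \<Rightarrow> 'a::euclidean_space) \<Rightarrow> 'a \<Rightarrow> nat \<Rightarrow> real" where
  "betaV k Jh Ih a b v u \<rho> =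
    (if \<rho> < a0 k then nderiv {-1..1} \<rho> (\<lambda>s. v (Tmap a b s) \<bullet> u) (-1)
     else if \<rho> < k then nderiv {-1..1} (\<rho> - a0 k + 1) (\<lambda>s. v (Tmap a b s) \<bullet> u) 1
     else Jh (\<lambda>s. s^(\<rho>-k) * Ih (nderiv {-1..1} 1 (\<lambda>s. v (Tmap a b s) \<bullet> u)) s)
        + (if k = 0 then (v (Tmap a b (-1)) \<bullet> u) * (-1)^(\<rho>-k) else 0))"

lemma compo_deriv:
  fixes f :: "real \<Rightarrow> 'a::euclidean_space"
  assumes ab: "a < b" and f: "Ck_on N {a..b} f" and i: "i \<le> N" and s: "s \<in> {-1..1}"
  shows "nderiv {-1..1} i (\<lambda>s. f (Tmap a b s) \<bullet> u) s = ((b - a) / 2)^i * (nderiv {a..b} i f (Tmap a b s) \<bullet> u)"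
proof -
  have "nderiv {-1..1} i (\<lambda>s. f (Tmap a b s) \<bullet> u) s = nderiv {-1..1} i (\<lambda>s. f (Tmap a b s)) s \<bullet> u"
    using inner_Ck(2)[OF _ affine_Ck(1)[OF ab f], of i s u] i s by simp
  also have "\<dots> = ((b - a) / 2)^i * (nderiv {a..b} i f (Tmap a b s) \<bullet> u)"
    using affine_Ck(2)[OF ab f i s] by simp
  finally show ?thesis .
qed

lemma deriv_equiv:
  fixes p v :: "real \<Rightarrow> 'a::euclidean_space"
  assumes ab: "a < b" and pv: "p \<in> vpolys r" and vC: "Ck_on N {a..b} v" and i: "i \<le> N" and s: "s \<in> {-1..1}"
    and Q: "\<forall>u\<in>Basis. \<forall>s. poly (Q u) s = p (Tmap a b s) \<bullet> u"
  shows "nderiv {a..b} i p (Tmap a b s) = nderiv {a..b} i v (Tmap a b s) \<longleftrightarrow>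
     (\<forall>u\<in>Basis. poly ((pderiv ^^ i) (Q u)) s = nderiv {-1..1} i (\<lambda>s. v (Tmap a b s) \<bullet> u) s)"
proof -
  define h where "h = (b - a) / 2"
  have hi: "h^i \<noteq> 0" using ab unfolding h_def by simp
  have pC: "Ck_on N {a..b} p" by (rule vpolys_Ck[OF pv ab])
  have ep: "poly ((pderiv ^^ i) (Q u)) s = h^i * (nderiv {a..b} i p (Tmap a b s) \<bullet> u)" if u: "u \<in> Basis" for u
  proof -
    have "(\<lambda>s. p (Tmap a b s) \<bullet> u) = poly (Q u)" using Q u by auto
    then have "poly ((pderiv ^^ i) (Q u)) s = nderiv {-1..1} i (\<lambda>s. p (Tmap a b s) \<bullet> u) s"
      using nderiv_poly[of "-1" 1 s i "Q u"] s by simp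
    then show ?thesis using compo_deriv[OF ab pC i s, of u] unfolding h_def by simp
  qed
  have ev: "nderiv {-1..1} i (\<lambda>s. v (Tmap a b s) \<bullet> u) s = h^i * (nderiv {a..b} i v (Tmap a b s) \<bullet> u)" for u
    using compo_deriv[OF ab vC i s, of u] unfolding h_def by simp
  show ?thesis
    unfolding euclidean_eq_iff[of "nderiv {a..b} i p (Tmap a b s)"] using ep ev hi by auto
qed

lemma double_delta:
  fixes X :: "'a::euclidean_space \<Rightarrow> nat \<Rightarrow> real"
  assumes "u0 \<in> Basis" "m \<le> n"
  shows "(\<Sum>u\<in>Basis. \<Sum>m'\<le>n. (if u = u0 \<and> m' = m then 1 else 0) * X u m') = X u0 m"
proof -
  have "(\<Sum>u\<in>Basis. \<Sum>m'\<le>n. (if u = u0 \<and> m' = m then 1 else 0) * X u m') = (\<Sum>u\<in>Basis. if u = u0 then X u0 m else 0)"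
  proof (intro sum.cong refl)
    fix u :: 'a assume "u \<in> Basis"
    show "(\<Sum>m'\<le>n. (if u = u0 \<and> m' = m then 1 else 0) * X u m') = (if u = u0 then X u0 m else 0)"
      using assms(2) by (cases "u = u0") (auto simp: if_distrib[of "\<lambda>t. t * _"] cong: if_cong)
  qed
  also have "\<dots> = X u0 m" using assms(1) by simp
  finally show ?thesis .
qed

lemma test_fun_expand:
  fixes u0 :: "'a::euclidean_space"
  assumes ab: "a < b" and u0: "u0 \<in> Basis" and m: "m \<le> n"
  shows "\<forall>u\<in>Basis. \<forall>s. (Tinv a b (Tmap a b s))^m *\<^sub>R u0 \<bullet> u = (\<Sum>m'\<le>n. (if u = u0 \<and> m' = m then 1 else 0) * s^m')"
proof (intro ballI allI)
  fix u :: 'a and s :: real assume u: "u \<in> Basis"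
  have "(\<Sum>m'\<le>n. (if u = u0 \<and> m' = m then 1 else 0) * s^m') = (if u = u0 then s^m else 0)"
    using m by (cases "u = u0") (auto simp: if_distrib[of "\<lambda>t. t * _"] cong: if_cong)
  then show "(Tinv a b (Tmap a b s))^m *\<^sub>R u0 \<bullet> u = (\<Sum>m'\<le>n. (if u = u0 \<and> m' = m then 1 else 0) * s^m')"
    using u u0 Tinv_Tmap[OF ab] by (auto simp: inner_Basis)
qed

lemma Lrow_high: "Lrow k Jh (k + m) Q = Jh (\<lambda>s. s^m * poly (pderiv Q) s) + (if k = 0 then poly Q (-1) * (-1)^m else 0)"
  using a0_le[of k] unfolding Lrow_def by auto

lemma betaV_high: "betaV k Jh Ih a b v u (k + m) = Jh (\<lambda>s. s^m * Ih (nderiv {-1..1} 1 (\<lambda>s. v (Tmap a b s) \<bullet> u)) s)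
        + (if k = 0 then (v (Tmap a b (-1)) \<bullet> u) * (-1)^m else 0)"
  using a0_le[of k] unfolding betaV_def by auto

lemma Jn_char:
  fixes v p :: "real \<Rightarrow> 'a::euclidean_space" and Q :: "'a \<Rightarrow> real poly"
  assumes ab: "a < b" and kr: "k \<le> r" and vC: "Ck_on (K+1) {a..b} v" and KK: "max kI kJs \<le> K"
    and Kk: "k div 2 \<le> K + 1"
    and L: "linJp kJs Jh"
    and JB: "\<forall>f. Ck_on kJs {-1..1} f \<longrightarrow> \<bar>Jh f\<bar> \<le> C0 * (\<Sum>j\<le>kJs. supn {-1..1} (nderiv {-1..1} j f))"
    and LI: "linIp kI Ih" and R: "regIp kI Ih"
    and IB0: "\<forall>f. Ck_on kI {-1..1} f \<longrightarrow> supn {-1..1} (nderiv {-1..1} 0 (Ih f)) \<le> C1 * (\<Sum>j\<le>kI. supn {-1..1} (nderiv {-1..1} j f))"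
    and pv: "p \<in> vpolys r" and Q: "\<forall>u\<in>Basis. \<forall>s. poly (Q u) s = p (Tmap a b s) \<bullet> u"
  shows "Jn_cond r k Jh Ih a b v p \<longleftrightarrow> (\<forall>u\<in>Basis. \<forall>\<rho>\<le>r. Lrow k Jh \<rho> (Q u) = betaV k Jh Ih a b v u \<rho>)"
proof -
  define Rw where "Rw = (\<lambda>\<rho>. \<forall>u\<in>Basis. Lrow k Jh \<rho> (Q u) = betaV k Jh Ih a b v u \<rho>)"
  have a0k: "a0 k \<le> k" by (rule a0_le)
  have split: "(\<forall>u\<in>Basis. \<forall>\<rho>\<le>r. Lrow k Jh \<rho> (Q u) = betaV k Jh Ih a b v u \<rho>) \<longleftrightarrow>
      (\<forall>\<rho><a0 k. Rw \<rho>) \<and> (\<forall>\<rho>. a0 k \<le> \<rho> \<and> \<rho> < k \<longrightarrow> Rw \<rho>) \<and> (\<forall>m\<le>r-k. Rw (k+m))"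
  proof
    assume H: "\<forall>u\<in>Basis. \<forall>\<rho>\<le>r. Lrow k Jh \<rho> (Q u) = betaV k Jh Ih a b v u \<rho>"
    show "(\<forall>\<rho><a0 k. Rw \<rho>) \<and> (\<forall>\<rho>. a0 k \<le> \<rho> \<and> \<rho> < k \<longrightarrow> Rw \<rho>) \<and> (\<forall>m\<le>r-k. Rw (k+m))"
      unfolding Rw_def using H a0k kr by auto
  next
    assume H: "(\<forall>\<rho><a0 k. Rw \<rho>) \<and> (\<forall>\<rho>. a0 k \<le> \<rho> \<and> \<rho> < k \<longrightarrow> Rw \<rho>) \<and> (\<forall>m\<le>r-k. Rw (k+m))"
    have "Rw \<rho>" if "\<rho> \<le> r" for \<rho>
    proof -
      consider "\<rho> < a0 k" | "a0 k \<le> \<rho> \<and> \<rho> < k" | "k \<le> \<rho>" by linarith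
      then show ?thesis
      proof cases
        case 3
        then have "\<rho> = k + (\<rho> - k)" "\<rho> - k \<le> r - k" using that by auto
        then show ?thesis using H by metis
      qed (use H in auto)
    qed
    then show "\<forall>u\<in>Basis. \<forall>\<rho>\<le>r. Lrow k Jh \<rho> (Q u) = betaV k Jh Ih a b v u \<rho>" unfolding Rw_def by blast
  qed
  have lowrow: "Rw \<rho> \<longleftrightarrow> nderiv {a..b} \<rho> p a = nderiv {a..b} \<rho> v a" if "\<rho> < a0 k" for \<rho>
  proof -
    have "\<rho> \<le> K + 1" using that Kk unfolding a0_def by (auto split: if_splits)
    then have "nderiv {a..b} \<rho> p (Tmap a b (-1)) = nderiv {a..b} \<rho> v (Tmap a b (-1)) \<longleftrightarrow>
     (\<forall>u\<in>Basis. poly ((pderiv ^^ \<rho>) (Q u)) (-1) = nderiv {-1..1} \<rho> (\<lambda>s. v (Tmap a b s) \<bullet> u) (-1))"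
      by (intro deriv_equiv[OF ab pv vC _ _ Q]) auto
    then show ?thesis unfolding Rw_def Lrow_def betaV_def Tmap_m1 using that by simp
  qed
  have midrow: "Rw \<rho> \<longleftrightarrow> nderiv {a..b} (\<rho> - a0 k + 1) p b = nderiv {a..b} (\<rho> - a0 k + 1) v b" if "a0 k \<le> \<rho>" "\<rho> < k" for \<rho>
  proof -
    have "\<rho> - a0 k + 1 \<le> k div 2" using that unfolding a0_def by (auto split: if_splits)
    then have "\<rho> - a0 k + 1 \<le> K + 1" using Kk by simp
    then have "nderiv {a..b} (\<rho> - a0 k + 1) p (Tmap a b 1) = nderiv {a..b} (\<rho> - a0 k + 1) v (Tmap a b 1) \<longleftrightarrow>
     (\<forall>u\<in>Basis. poly ((pderiv ^^ (\<rho> - a0 k + 1)) (Q u)) 1 = nderiv {-1..1} (\<rho> - a0 k + 1) (\<lambda>s. v (Tmap a b s) \<bullet> u) 1)"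
      by (intro deriv_equiv[OF ab pv vC _ _ Q]) auto
    then show ?thesis unfolding Rw_def Lrow_def betaV_def Tmap_1 using that by simp
  qed
  have D1: "(1 \<le> k \<longrightarrow> (\<forall>i \<le> (k - 1) div 2. nderiv {a..b} i p a = nderiv {a..b} i v a)) \<longleftrightarrow> (\<forall>\<rho><a0 k. Rw \<rho>)"
  proof (cases "k = 0")
    case True
    then show ?thesis unfolding a0_def by simp
  next
    case False
    then have "\<rho> < a0 k \<longleftrightarrow> \<rho> \<le> (k - 1) div 2" for \<rho> unfolding a0_def by auto
    then show ?thesis using lowrow False by auto
  qed
  have D2: "(2 \<le> k \<longrightarrow> (\<forall>i\<in>{1..k div 2}. nderiv {a..b} i p b = nderiv {a..b} i v b)) \<longleftrightarrow> (\<forall>\<rho>. a0 k \<le> \<rho> \<and> \<rho> < k \<longrightarrow> Rw \<rho>)"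
  proof (cases "k \<le> 1")
    case True
    then have "\<not> (a0 k \<le> \<rho> \<and> \<rho> < k)" for \<rho> unfolding a0_def by auto
    then show ?thesis using True by auto
  next
    case False
    have ak: "a0 k + k div 2 = k" using False unfolding a0_def by auto
    show ?thesis
    proof
      assume H: "2 \<le> k \<longrightarrow> (\<forall>i\<in>{1..k div 2}. nderiv {a..b} i p b = nderiv {a..b} i v b)"
      show "\<forall>\<rho>. a0 k \<le> \<rho> \<and> \<rho> < k \<longrightarrow> Rw \<rho>"
      proof (intro allI impI)
        fix \<rho> assume r: "a0 k \<le> \<rho> \<and> \<rho> < k"
        then have i: "\<rho> - a0 k + 1 \<in> {1..k div 2}" using ak by auto
        have "2 \<le> k" using False by simp
        then have "nderiv {a..b} (\<rho> - a0 k + 1) p b = nderiv {a..b} (\<rho> - a0 k + 1) v b" using H[rule_format, OF _ i] by simp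
        then show "Rw \<rho>" using midrow[of \<rho>] r by simp
      qed
    next
      assume H: "\<forall>\<rho>. a0 k \<le> \<rho> \<and> \<rho> < k \<longrightarrow> Rw \<rho>"
      show "2 \<le> k \<longrightarrow> (\<forall>i\<in>{1..k div 2}. nderiv {a..b} i p b = nderiv {a..b} i v b)"
      proof (intro impI ballI)
        fix i assume i: "i \<in> {1..k div 2}"
        define \<rho> where "\<rho> = a0 k + i - 1"
        have r: "a0 k \<le> \<rho>" "\<rho> < k" "\<rho> - a0 k + 1 = i" using i ak unfolding \<rho>_def by auto
        then show "nderiv {a..b} i p b = nderiv {a..b} i v b" using midrow[OF r(1,2)] H by auto
      qed
    qed
  qed
  have I: "(\<forall>\<phi>\<in>vpolys (r - k).
        locJ Jh a b (\<lambda>x. nderiv {a..b} 1 p x \<bullet> \<phi> x) + (if k = 0 then p a \<bullet> \<phi> a else 0)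
      = locJ Jh a b (\<lambda>x. locI Ih a b (nderiv {a..b} 1 v) x \<bullet> \<phi> x) + (if k = 0 then v a \<bullet> \<phi> a else 0))
     \<longleftrightarrow> (\<forall>m\<le>r-k. Rw (k+m))"
  proof
    assume H: "\<forall>\<phi>\<in>vpolys (r - k).
        locJ Jh a b (\<lambda>x. nderiv {a..b} 1 p x \<bullet> \<phi> x) + (if k = 0 then p a \<bullet> \<phi> a else 0)
      = locJ Jh a b (\<lambda>x. locI Ih a b (nderiv {a..b} 1 v) x \<bullet> \<phi> x) + (if k = 0 then v a \<bullet> \<phi> a else 0)"
    show "\<forall>m\<le>r-k. Rw (k+m)" unfolding Rw_def
    proof (intro allI impI ballI)
      fix m and u0 :: 'a assume m: "m \<le> r - k" and u0: "u0 \<in> Basis"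
      define \<phi> where "\<phi> = (\<lambda>x. (Tinv a b x)^m *\<^sub>R u0)"
      have \<phi>v: "\<phi> \<in> vpolys (r - k)" unfolding \<phi>_def by (rule vpolys_mono[OF m test_fun_vpolys])
      define d where "d = (\<lambda>u m'. if u = u0 \<and> m' = m then 1 else (0::real))"
      have d: "\<forall>u\<in>Basis. \<forall>s. \<phi> (Tmap a b s) \<bullet> u = (\<Sum>m'\<le>r-k. d u m' * s^m')"
        unfolding \<phi>_def d_def by (rule test_fun_expand[OF ab u0 m])
      have "(\<Sum>u\<in>Basis. \<Sum>m'\<le>r-k. d u m' * (Jh (\<lambda>s. s^m' * poly (pderiv (Q u)) s) + (if k = 0 then poly (Q u) (-1) * (-1)^m' else 0)))
          = (\<Sum>u\<in>Basis. \<Sum>m'\<le>r-k. d u m' * (Jh (\<lambda>s. s^m' * Ih (nderiv {-1..1} 1 (\<lambda>s. v (Tmap a b s) \<bullet> u)) s)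
              + (if k = 0 then (v (Tmap a b (-1)) \<bullet> u) * (-1)^m' else 0)))"
        using bspec[OF H \<phi>v] unfolding LHS_expand[OF ab pv Q d L JB, of k] RHS_expand[OF ab vC KK d L JB LI R IB0, of k] .
      then show "Lrow k Jh (k + m) (Q u0) = betaV k Jh Ih a b v u0 (k + m)"
        unfolding d_def double_delta[OF u0 m, of "\<lambda>u m'. Jh (\<lambda>s. s^m' * poly (pderiv (Q u)) s) + (if k = 0 then poly (Q u) (-1) * (-1)^m' else 0)"]
          double_delta[OF u0 m, of "\<lambda>u m'. Jh (\<lambda>s. s^m' * Ih (nderiv {-1..1} 1 (\<lambda>s. v (Tmap a b s) \<bullet> u)) s)
              + (if k = 0 then (v (Tmap a b (-1)) \<bullet> u) * (-1)^m' else 0)"]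
        Lrow_high betaV_high .
    qed
  next
    assume H: "\<forall>m\<le>r-k. Rw (k+m)"
    show "\<forall>\<phi>\<in>vpolys (r - k).
        locJ Jh a b (\<lambda>x. nderiv {a..b} 1 p x \<bullet> \<phi> x) + (if k = 0 then p a \<bullet> \<phi> a else 0)
      = locJ Jh a b (\<lambda>x. locI Ih a b (nderiv {a..b} 1 v) x \<bullet> \<phi> x) + (if k = 0 then v a \<bullet> \<phi> a else 0)"
    proof
      fix \<phi> :: "real \<Rightarrow> 'a" assume \<phi>v: "\<phi> \<in> vpolys (r - k)"
      have "\<forall>u\<in>Basis. \<exists>\<Phi>. degree \<Phi> \<le> r - k \<and> (\<forall>s. poly \<Phi> s = \<phi> (Tmap a b s) \<bullet> u)"
        using vpolys_Q[OF \<phi>v] by blast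
      then obtain \<Phi> where \<Phi>: "\<forall>u\<in>Basis. degree (\<Phi> u) \<le> r - k \<and> (\<forall>s. poly (\<Phi> u) s = \<phi> (Tmap a b s) \<bullet> u)"
        by metis
      define d where "d = (\<lambda>u m. coeff (\<Phi> u) m)"
      have d: "\<forall>u\<in>Basis. \<forall>s. \<phi> (Tmap a b s) \<bullet> u = (\<Sum>m\<le>r-k. d u m * s^m)"
      proof (intro ballI allI)
        fix u :: 'a and s :: real assume u: "u \<in> Basis"
        have "poly (\<Phi> u) s = (\<Sum>m\<le>r-k. d u m * s^m)" unfolding d_def
          using \<Phi> u by (subst poly_as_sum_of_monoms'[symmetric, of "\<Phi> u" "r-k"]) (auto simp: poly_sum poly_monom)
        then show "\<phi> (Tmap a b s) \<bullet> u = (\<Sum>m\<le>r-k. d u m * s^m)" using \<Phi> u by simp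
      qed
      have eq: "Lrow k Jh (k + m) (Q u) = betaV k Jh Ih a b v u (k + m)" if "u \<in> Basis" "m \<le> r - k" for u m
        using H that unfolding Rw_def by blast
      show "locJ Jh a b (\<lambda>x. nderiv {a..b} 1 p x \<bullet> \<phi> x) + (if k = 0 then p a \<bullet> \<phi> a else 0)
      = locJ Jh a b (\<lambda>x. locI Ih a b (nderiv {a..b} 1 v) x \<bullet> \<phi> x) + (if k = 0 then v a \<bullet> \<phi> a else 0)"
        unfolding LHS_expand[OF ab pv Q d L JB, of k] RHS_expand[OF ab vC KK d L JB LI R IB0, of k]
        using eq unfolding Lrow_high betaV_high by (intro sum.cong refl) auto
    qed
  qed
  show ?thesis unfolding Jn_cond_def split D1 D2 I using pv by simp
qed

lemma coeff_monom_sum: "coeff (\<Sum>i\<le>r. monom (c i) i) j = (if j \<le> r then c j else 0)"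
  by (simp add: coeff_sum coeff_monom)

lemma degree_monom_sum: "degree (\<Sum>i\<le>r. monom (c i) i) \<le> r"
  by (intro degree_sum_le) (auto intro: order.trans[OF degree_monom_le])

lemma Jn_explicit:
  fixes v :: "real \<Rightarrow> 'a::euclidean_space"
  assumes ab: "a < b" and kr: "k \<le> r" and vC: "Ck_on (K+1) {a..b} v" and KK: "max kI kJs \<le> K"
    and Kk: "k div 2 \<le> K + 1"
    and L: "linJp kJs Jh"
    and JB: "\<forall>f. Ck_on kJs {-1..1} f \<longrightarrow> \<bar>Jh f\<bar> \<le> C0 * (\<Sum>j\<le>kJs. supn {-1..1} (nderiv {-1..1} j f))"
    and LI: "linIp kI Ih" and R: "regIp kI Ih"
    and IB0: "\<forall>f. Ck_on kI {-1..1} f \<longrightarrow> supn {-1..1} (nderiv {-1..1} 0 (Ih f)) \<le> C1 * (\<Sum>j\<le>kI. supn {-1..1} (nderiv {-1..1} j f))"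
    and B: "\<forall>y. (\<forall>\<rho>\<le>r. Lrow k Jh \<rho> (\<Sum>i\<le>r. monom (\<Sum>l\<le>r. B i l * y l) i) = y \<rho>)
          \<and> (\<forall>Q. degree Q \<le> r \<and> (\<forall>\<rho>\<le>r. Lrow k Jh \<rho> Q = y \<rho>) \<longrightarrow> (\<forall>i\<le>r. coeff Q i = (\<Sum>l\<le>r. B i l * y l)))"
  shows "Jn r k Jh Ih a b v \<in> vpolys r \<and>
    (\<forall>u\<in>Basis. \<forall>s. poly (\<Sum>i\<le>r. monom (\<Sum>l\<le>r. B i l * betaV k Jh Ih a b v u l) i) s = Jn r k Jh Ih a b v (Tmap a b s) \<bullet> u)"
proof -
  define Q0 where "Q0 = (\<lambda>u. \<Sum>i\<le>r. monom (\<Sum>l\<le>r. B i l * betaV k Jh Ih a b v u l) i)"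
  define Li where "Li = [:-(a+b)/(b-a), 2/(b-a):]"
  define p0 where "p0 = (\<lambda>x. \<Sum>u\<in>(Basis::'a set). poly (Q0 u) (Tinv a b x) *\<^sub>R u)"
  have dQ0: "degree (Q0 u) \<le> r" for u unfolding Q0_def by (rule degree_monom_sum)
  have p0e: "p0 = (\<lambda>x. \<Sum>u\<in>(Basis::'a set). poly (pcompose (Q0 u) Li) x *\<^sub>R u)"
    unfolding p0_def Li_def poly_pcompose Tinv_poly by (rule refl)
  have dc: "degree (pcompose (Q0 u) Li) \<le> r" for u
  proof -
    have "degree (pcompose (Q0 u) Li) \<le> degree (Q0 u) * degree Li" by (simp add: degree_pcompose)
    also have "\<dots> \<le> r * 1" by (intro mult_mono dQ0) (auto simp: Li_def)
    finally show ?thesis by simp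
  qed
  have p0v: "p0 \<in> vpolys r" unfolding p0e by (rule sum_poly_vpolys) (use dc in auto)
  have Q0r: "\<forall>u\<in>Basis. \<forall>s. poly (Q0 u) s = p0 (Tmap a b s) \<bullet> u"
  proof (intro ballI allI)
    fix u :: 'a and s :: real assume u: "u \<in> Basis"
    have "p0 (Tmap a b s) \<bullet> u = (\<Sum>u'\<in>Basis. poly (Q0 u') s * (u' \<bullet> u))"
      unfolding p0_def Tinv_Tmap[OF ab] by (simp add: inner_sum_left)
    also have "\<dots> = (\<Sum>u'\<in>Basis. if u' = u then poly (Q0 u) s else 0)"
      by (intro sum.cong refl) (use u in \<open>auto simp: inner_Basis\<close>)
    also have "\<dots> = poly (Q0 u) s" using u by simp
    finally show "poly (Q0 u) s = p0 (Tmap a b s) \<bullet> u" by simp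
  qed
  have char: "Jn_cond r k Jh Ih a b v p \<longleftrightarrow> (\<forall>u\<in>Basis. \<forall>\<rho>\<le>r. Lrow k Jh \<rho> (Q u) = betaV k Jh Ih a b v u \<rho>)"
    if "p \<in> vpolys r" "\<forall>u\<in>Basis. \<forall>s. poly (Q u) s = p (Tmap a b s) \<bullet> u" for p Q
    by (rule Jn_char[OF ab kr vC KK Kk L JB LI R IB0 that])
  have c0: "Jn_cond r k Jh Ih a b v p0"
    using char[OF p0v Q0r] B unfolding Q0_def by blast
  have uniq: "p1 = p0" if c1: "Jn_cond r k Jh Ih a b v p1" for p1
  proof -
    have p1v: "p1 \<in> vpolys r" using c1 unfolding Jn_cond_def by blast
    have "\<forall>u\<in>Basis. \<exists>Q. degree Q \<le> r \<and> (\<forall>s. poly Q s = p1 (Tmap a b s) \<bullet> u)" using vpolys_Q[OF p1v] by blast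
    then obtain Q1 where Q1: "\<forall>u\<in>Basis. degree (Q1 u) \<le> r \<and> (\<forall>s. poly (Q1 u) s = p1 (Tmap a b s) \<bullet> u)" by metis
    have rows: "\<forall>u\<in>Basis. \<forall>\<rho>\<le>r. Lrow k Jh \<rho> (Q1 u) = betaV k Jh Ih a b v u \<rho>"
      using char[OF p1v] Q1 c1 by blast
    have QQ: "Q1 u = Q0 u" if u: "u \<in> Basis" for u
    proof (rule poly_eqI)
      fix i
      show "coeff (Q1 u) i = coeff (Q0 u) i"
      proof (cases "i \<le> r")
        case True
        then show ?thesis using B rows u Q1 unfolding Q0_def coeff_monom_sum by auto
      next
        case False
        then have "coeff (Q1 u) i = 0" using Q1 u by (intro coeff_eq_0) auto
        then show ?thesis using False unfolding Q0_def coeff_monom_sum by simp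
      qed
    qed
    show "p1 = p0"
    proof
      fix x
      have "p1 x = (\<Sum>u\<in>Basis. (p1 x \<bullet> u) *\<^sub>R u)" by (rule euclidean_representation[symmetric])
      also have "\<dots> = (\<Sum>u\<in>Basis. poly (Q0 u) (Tinv a b x) *\<^sub>R u)"
      proof (intro sum.cong refl)
        fix u :: 'a assume u: "u \<in> Basis"
        have "p1 x \<bullet> u = poly (Q1 u) (Tinv a b x)" using Q1 u Tmap_Tinv[OF ab, of x] by metis
        then show "(p1 x \<bullet> u) *\<^sub>R u = poly (Q0 u) (Tinv a b x) *\<^sub>R u" using QQ[OF u] by simp
      qed
      finally show "p1 x = p0 x" unfolding p0_def .
    qed
  qed
  have "Jn r k Jh Ih a b v = p0" unfolding Jn_def by (rule the_equality[where P="Jn_cond r k Jh Ih a b v", OF c0 uniq])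
  then show ?thesis using p0v Q0r unfolding Q0_def by simp
qed

lemma higher_pderiv_0: "(pderiv ^^ l) 0 = 0"
  by (induction l) auto

lemma higher_pderiv_sum:
  assumes "finite A"
  shows "(pderiv ^^ l) (\<Sum>i\<in>A. f i) = (\<Sum>i\<in>A. (pderiv ^^ l) (f i))"
  using assms by (induction A rule: finite_induct) (auto simp: higher_pderiv_0 higher_pderiv_add)

lemma monom_deriv_bound:
  fixes s c :: real
  assumes s: "\<bar>s\<bar> \<le> 1"
  shows "\<bar>poly ((pderiv ^^ l) (monom c i)) s\<bar> \<le> \<bar>c\<bar> * real i ^ l"
proof (induction l arbitrary: c i)
  case 0
  have "\<bar>s\<bar>^i \<le> 1" using s by (simp add: power_le_one)
  then show ?case by (simp add: poly_monom abs_mult power_abs mult_left_le)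
next
  case (Suc l)
  have "(pderiv ^^ Suc l) (monom c i) = (pderiv ^^ l) (monom (of_nat i * c) (i - 1))"
    by (simp add: funpow_Suc_right pderiv_monom del: funpow.simps)
  then have "\<bar>poly ((pderiv ^^ Suc l) (monom c i)) s\<bar> \<le> \<bar>of_nat i * c\<bar> * real (i - 1) ^ l"
    using Suc.IH[of "of_nat i * c" "i - 1"] by simp
  also have "\<dots> \<le> \<bar>of_nat i * c\<bar> * real i ^ l"
    by (intro mult_left_mono power_mono) auto
  also have "\<dots> = \<bar>c\<bar> * real i ^ Suc l" by (simp add: abs_mult)
  finally show ?case .
qed

lemma poly_deriv_bound:
  fixes s :: real
  assumes s: "\<bar>s\<bar> \<le> 1"
  shows "\<bar>poly ((pderiv ^^ l) (\<Sum>i\<le>r. monom (c i) i)) s\<bar> \<le> (\<Sum>i\<le>r. \<bar>c i\<bar> * real i ^ l)"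
proof -
  have "\<bar>poly ((pderiv ^^ l) (\<Sum>i\<le>r. monom (c i) i)) s\<bar> = \<bar>\<Sum>i\<le>r. poly ((pderiv ^^ l) (monom (c i) i)) s\<bar>"
    by (simp add: higher_pderiv_sum poly_sum)
  also have "\<dots> \<le> (\<Sum>i\<le>r. \<bar>poly ((pderiv ^^ l) (monom (c i) i)) s\<bar>)" by (rule sum_abs)
  also have "\<dots> \<le> (\<Sum>i\<le>r. \<bar>c i\<bar> * real i ^ l)" by (intro sum_mono monom_deriv_bound[OF s])
  finally show ?thesis .
qed

lemma vh_sup_bound:
  fixes v :: "real \<Rightarrow> 'a::euclidean_space"
  assumes ab: "a < b" and vC: "Ck_on N {a..b} v" and j: "j \<le> N" and u: "u \<in> Basis"
  shows "supn {-1..1} (nderiv {-1..1} j (\<lambda>s. v (Tmap a b s) \<bullet> u)) \<le> ((b - a) / 2)^j * supn {a<..b} (nderiv {a..b} j v)"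
proof (rule supn_le)
  show "{-1..1::real} \<noteq> {}" by simp
next
  fix s :: real assume s: "s \<in> {-1..1}"
  have h0: "0 \<le> ((b - a) / 2)^j" using ab by simp
  have T: "Tmap a b s \<in> {a..b}" using Tmap_image[OF ab] s by auto
  have cont: "continuous_on (closure {a<..b}) (nderiv {a..b} j v)"
    using Ck_on_C[OF vC j] closure_greaterThanAtMost[OF ab] by simp
  have "\<forall>y\<in>{a<..b}. norm (nderiv {a..b} j v y) \<le> supn {a<..b} (nderiv {a..b} j v)"
  proof
    fix y assume "y \<in> {a<..b}"
    moreover have sub: "{a<..b} \<subseteq> {a..b}" by auto
    ultimately show "norm (nderiv {a..b} j v y) \<le> supn {a<..b} (nderiv {a..b} j v)"
      using supn_upper[OF Ck_on_C[OF vC j] compact_Icc sub] by blast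
  qed
  then have nb: "norm (nderiv {a..b} j v (Tmap a b s)) \<le> supn {a<..b} (nderiv {a..b} j v)"
    using continuous_on_closure_norm_le[OF cont] T closure_greaterThanAtMost[OF ab] by blast
  have "norm (nderiv {-1..1} j (\<lambda>s. v (Tmap a b s) \<bullet> u) s) = ((b - a) / 2)^j * \<bar>nderiv {a..b} j v (Tmap a b s) \<bullet> u\<bar>"
    using compo_deriv[OF ab vC j s, of u] h0 by (simp add: abs_mult)
  also have "\<dots> \<le> ((b - a) / 2)^j * norm (nderiv {a..b} j v (Tmap a b s))"
    by (intro mult_left_mono h0 Basis_le_norm u)
  also have "\<dots> \<le> ((b - a) / 2)^j * supn {a<..b} (nderiv {a..b} j v)"
    by (intro mult_left_mono h0 nb)
  finally show "norm (nderiv {-1..1} j (\<lambda>s. v (Tmap a b s) \<bullet> u) s) \<le> ((b - a) / 2)^j * supn {a<..b} (nderiv {a..b} j v)" .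
qed

lemma beta_bound:
  fixes v :: "real \<Rightarrow> 'a::euclidean_space"
  assumes ab: "a < b" and vC: "Ck_on (K+1) {a..b} v" and KK: "max kI kJs \<le> K"
    and Kk: "k div 2 \<le> K + 1" and rho: "\<rho> \<le> r" and kr: "k \<le> r"
    and JB: "\<forall>f. Ck_on kJs {-1..1} f \<longrightarrow> \<bar>Jh f\<bar> \<le> C0 * (\<Sum>j\<le>kJs. supn {-1..1} (nderiv {-1..1} j f))"
    and C0: "0 \<le> C0"
    and IB: "\<forall>l\<le>kJs. \<forall>f. Ck_on (max kI l) {-1..1} f \<longrightarrow>
               supn {-1..1} (nderiv {-1..1} l (Ih f)) \<le> C1 * (\<Sum>j\<le>max kI l. supn {-1..1} (nderiv {-1..1} j f))"
    and C1: "0 \<le> C1" and R: "regIp kI Ih"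
  shows "\<bar>betaV k Jh Ih a b v u \<rho>\<bar> \<le> (C0 * real (kJs+1)^(r+2) * C1 + 1) * (\<Sum>j\<le>K+1. supn {-1..1} (nderiv {-1..1} j (\<lambda>s. v (Tmap a b s) \<bullet> u)))"
proof -
  define vh where "vh = (\<lambda>s. v (Tmap a b s) \<bullet> u)"
  define W where "W = (\<Sum>j\<le>K+1. supn {-1..1} (nderiv {-1..1} j vh))"
  define Kc where "Kc = C0 * real (kJs+1)^(r+2) * C1"
  have Kc0: "0 \<le> Kc" unfolding Kc_def using C0 C1 by simp
  have vhC: "Ck_on (K+1) {-1..1} vh" unfolding vh_def by (rule inner_Ck(1)[OF _ affine_Ck(1)[OF ab vC]]) simp
  have sn: "0 \<le> supn {-1..1} (nderiv {-1..1} j vh)" if "j \<le> K+1" for j by (rule supn_nonneg_Ck[OF vhC that])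
  have W0: "0 \<le> W" unfolding W_def by (intro sum_nonneg sn) auto
  have pt: "\<bar>nderiv {-1..1} j vh s\<bar> \<le> W" if j: "j \<le> K+1" and s: "s \<in> {-1..1}" for j s
  proof -
    have "\<bar>nderiv {-1..1} j vh s\<bar> \<le> supn {-1..1} (nderiv {-1..1} j vh)"
      using supn_upper[OF Ck_on_C[OF vhC j] compact_Icc order_refl s] by simp
    also have "\<dots> \<le> W" unfolding W_def by (rule member_le_sum) (use j sn in auto)
    finally show ?thesis .
  qed
  have main: "\<bar>betaV k Jh Ih a b v u \<rho>\<bar> \<le> Kc * W + W"
  proof -
    consider "\<rho> < a0 k" | "a0 k \<le> \<rho> \<and> \<rho> < k" | "k \<le> \<rho>" by linarith
    then show ?thesis
    proof cases
      case 1
      then have "\<rho> \<le> K + 1" using Kk unfolding a0_def by (auto split: if_splits)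
      then have "\<bar>betaV k Jh Ih a b v u \<rho>\<bar> \<le> W" using 1 pt[of \<rho> "-1"] unfolding betaV_def vh_def by simp
      then show ?thesis using Kc0 W0 by (smt (verit) mult_nonneg_nonneg)
    next
      case 2
      then have "\<rho> - a0 k + 1 \<le> k div 2" unfolding a0_def by (auto split: if_splits)
      then have "\<rho> - a0 k + 1 \<le> K + 1" using Kk by simp
      then have "\<bar>betaV k Jh Ih a b v u \<rho>\<bar> \<le> W" using 2 pt[of "\<rho> - a0 k + 1" 1] unfolding betaV_def vh_def by simp
      then show ?thesis using Kc0 W0 by (smt (verit) mult_nonneg_nonneg)
    next
      case 3
      define m where "m = \<rho> - k"
      have rk: "\<rho> = k + m" and mr: "m \<le> r" using 3 rho unfolding m_def by auto
      have wC: "Ck_on K {-1..1} (nderiv {-1..1} 1 vh)" by (rule Ck_on_Suc) (use vhC in simp)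
      have "\<bar>Jh (\<lambda>s. s^m * Ih (nderiv {-1..1} 1 vh) s)\<bar>
          \<le> C0 * real (kJs+1)^(m+2) * C1 * (\<Sum>j\<le>K. supn {-1..1} (nderiv {-1..1} j (nderiv {-1..1} 1 vh)))"
        by (rule rowJ_bound[OF JB C0 IB C1 R wC KK])
      also have "(\<Sum>j\<le>K. supn {-1..1} (nderiv {-1..1} j (nderiv {-1..1} 1 vh))) \<le> W"
      proof -
        have "(\<Sum>j\<le>K. supn {-1..1} (nderiv {-1..1} j (nderiv {-1..1} 1 vh))) = (\<Sum>j\<le>K. supn {-1..1} (nderiv {-1..1} (Suc j) vh))"
          unfolding nderiv_shift ..
        also have "\<dots> \<le> supn {-1..1} (nderiv {-1..1} 0 vh) + (\<Sum>j\<le>K. supn {-1..1} (nderiv {-1..1} (Suc j) vh))"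
          using sn[of 0] by simp
        also have "\<dots> = W" unfolding W_def by (simp only: Suc_eq_plus1[symmetric] sum.atMost_Suc_shift)
        finally show ?thesis .
      qed
      then have "C0 * real (kJs+1)^(m+2) * C1 * (\<Sum>j\<le>K. supn {-1..1} (nderiv {-1..1} j (nderiv {-1..1} 1 vh)))
          \<le> C0 * real (kJs+1)^(m+2) * C1 * W" using C0 C1 by (intro mult_left_mono) auto
      also have "\<dots> \<le> Kc * W" unfolding Kc_def
        by (intro mult_right_mono W0 mult_left_mono C0 C1 power_increasing) (use mr in auto)
      finally have J: "\<bar>Jh (\<lambda>s. s^m * Ih (nderiv {-1..1} 1 vh) s)\<bar> \<le> Kc * W" .
      have d: "\<bar>(if k = 0 then (v (Tmap a b (-1)) \<bullet> u) * (-1)^m else 0)\<bar> \<le> W"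
        using pt[of 0 "-1"] W0 unfolding vh_def by (auto simp: abs_mult)
      have "betaV k Jh Ih a b v u \<rho> = Jh (\<lambda>s. s^m * Ih (nderiv {-1..1} 1 vh) s) + (if k = 0 then (v (Tmap a b (-1)) \<bullet> u) * (-1)^m else 0)"
        unfolding rk betaV_high vh_def ..
      then show ?thesis using J d by linarith
    qed
  qed
  then show ?thesis unfolding Kc_def W_def vh_def by (simp add: algebra_simps)
qed

lemma final_bound:
  fixes v :: "real \<Rightarrow> 'a::euclidean_space"
  assumes ab: "a < b" and kr: "k \<le> r" and vC: "Ck_on (K+1) {a..b} v" and KK: "max kI kJs \<le> K"
    and Kk: "k div 2 \<le> K + 1" and l: "l \<le> r"
    and L: "linJp kJs Jh"
    and JB: "\<forall>f. Ck_on kJs {-1..1} f \<longrightarrow> \<bar>Jh f\<bar> \<le> C0 * (\<Sum>j\<le>kJs. supn {-1..1} (nderiv {-1..1} j f))"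
    and C0: "0 \<le> C0"
    and IB: "\<forall>l\<le>kJs. \<forall>f. Ck_on (max kI l) {-1..1} f \<longrightarrow>
               supn {-1..1} (nderiv {-1..1} l (Ih f)) \<le> C1 * (\<Sum>j\<le>max kI l. supn {-1..1} (nderiv {-1..1} j f))"
    and C1: "0 \<le> C1" and LI: "linIp kI Ih" and R: "regIp kI Ih"
    and B: "\<forall>y. (\<forall>\<rho>\<le>r. Lrow k Jh \<rho> (\<Sum>i\<le>r. monom (\<Sum>l\<le>r. B i l * y l) i) = y \<rho>)
          \<and> (\<forall>Q. degree Q \<le> r \<and> (\<forall>\<rho>\<le>r. Lrow k Jh \<rho> Q = y \<rho>) \<longrightarrow> (\<forall>i\<le>r. coeff Q i = (\<Sum>l\<le>r. B i l * y l)))"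
  shows "supn {a<..b} (nderiv {a..b} l (Jn r k Jh Ih a b v))
     \<le> (real DIM('a) * (\<Sum>i\<le>r. real i ^ l * (\<Sum>\<rho>\<le>r. \<bar>B i \<rho>\<bar>)) * (C0 * real (kJs+1)^(r+2) * C1 + 1))
       * (\<Sum>j\<le>K+1. ((b - a) / 2) powi (int j - int l) * supn {a<..b} (nderiv {a..b} j v))"
proof -
  define h where "h = (b - a) / 2"
  have h0: "0 < h" using ab unfolding h_def by simp
  define p where "p = Jn r k Jh Ih a b v"
  have IB0: "\<forall>f. Ck_on kI {-1..1} f \<longrightarrow> supn {-1..1} (nderiv {-1..1} 0 (Ih f)) \<le> C1 * (\<Sum>j\<le>kI. supn {-1..1} (nderiv {-1..1} j f))"
    using IB by (metis max_0R zero_le)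
  define c where "c = (\<lambda>u i. \<Sum>l\<le>r. B i l * betaV k Jh Ih a b v u l)"
  have ex: "p \<in> vpolys r \<and> (\<forall>u\<in>Basis. \<forall>s. poly (\<Sum>i\<le>r. monom (c u i) i) s = p (Tmap a b s) \<bullet> u)"
    unfolding p_def c_def by (rule Jn_explicit[OF ab kr vC KK Kk L JB LI R IB0 B])
  then have pv: "p \<in> vpolys r" and Qr: "\<forall>u\<in>Basis. \<forall>s. poly (\<Sum>i\<le>r. monom (c u i) i) s = p (Tmap a b s) \<bullet> u" by auto
  define Kc where "Kc = C0 * real (kJs+1)^(r+2) * C1 + 1"
  have Kc0: "0 \<le> Kc" unfolding Kc_def using C0 C1 by simp
  define G where "G = (\<Sum>i\<le>r. real i ^ l * (\<Sum>\<rho>\<le>r. \<bar>B i \<rho>\<bar>))"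
  have G0: "0 \<le> G" unfolding G_def by (intro sum_nonneg mult_nonneg_nonneg sum_nonneg) auto
  define Sv where "Sv = (\<lambda>j. supn {a<..b} (nderiv {a..b} j v))"
  define V where "V = (\<Sum>j\<le>K+1. h^j * Sv j)"
  define W where "W = (\<lambda>u. \<Sum>j\<le>K+1. supn {-1..1} (nderiv {-1..1} j (\<lambda>s. v (Tmap a b s) \<bullet> u)))"
  have WV: "W u \<le> V" if u: "u \<in> Basis" for u
    unfolding W_def V_def Sv_def h_def by (intro sum_mono vh_sup_bound[OF ab vC _ u]) auto
  have cb: "\<bar>c u i\<bar> \<le> (\<Sum>\<rho>\<le>r. \<bar>B i \<rho>\<bar>) * (Kc * V)" if u: "u \<in> Basis" for u i
  proof -
    have "\<bar>c u i\<bar> \<le> (\<Sum>\<rho>\<le>r. \<bar>B i \<rho>\<bar> * \<bar>betaV k Jh Ih a b v u \<rho>\<bar>)"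
      unfolding c_def by (rule order.trans[OF sum_abs]) (simp add: abs_mult)
    also have "\<dots> \<le> (\<Sum>\<rho>\<le>r. \<bar>B i \<rho>\<bar> * (Kc * V))"
    proof (intro sum_mono mult_left_mono)
      fix \<rho> assume "\<rho> \<in> {..r}"
      then have "\<bar>betaV k Jh Ih a b v u \<rho>\<bar> \<le> Kc * W u"
        unfolding Kc_def W_def by (intro beta_bound[OF ab vC KK Kk _ kr JB C0 IB C1 R]) auto
      also have "\<dots> \<le> Kc * V" by (intro mult_left_mono WV u Kc0)
      finally show "\<bar>betaV k Jh Ih a b v u \<rho>\<bar> \<le> Kc * V" .
    qed simp
    also have "\<dots> = (\<Sum>\<rho>\<le>r. \<bar>B i \<rho>\<bar>) * (Kc * V)" by (simp add: sum_distrib_right)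
    finally show ?thesis .
  qed
  have pC: "Ck_on l {a..b} p" by (rule vpolys_Ck[OF pv ab])
  have pt: "norm (nderiv {a..b} l p x) \<le> real DIM('a) * G * Kc * V / h^l" if x: "x \<in> {a<..b}" for x
  proof -
    define s where "s = Tinv a b x"
    have xs: "Tmap a b s = x" unfolding s_def by (rule Tmap_Tinv[OF ab])
    have s1: "s \<in> {-1..1}"
    proof -
      have "x \<in> Tmap a b ` {-1..1}" using Tmap_image[OF ab] x by auto
      then obtain s' where "s' \<in> {-1..1}" "x = Tmap a b s'" by auto
      then show ?thesis unfolding s_def using Tinv_Tmap[OF ab] by auto
    qed
    have sabs: "\<bar>s\<bar> \<le> 1" using s1 by auto
    have comp: "nderiv {a..b} l p x \<bullet> u = poly ((pderiv ^^ l) (\<Sum>i\<le>r. monom (c u i) i)) s / h^l" if u: "u \<in> Basis" for u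
    proof -
      have "(\<lambda>s. p (Tmap a b s) \<bullet> u) = poly (\<Sum>i\<le>r. monom (c u i) i)" using Qr u by auto
      then have "poly ((pderiv ^^ l) (\<Sum>i\<le>r. monom (c u i) i)) s = nderiv {-1..1} l (\<lambda>s. p (Tmap a b s) \<bullet> u) s"
        using nderiv_poly[of "-1" 1 s l] s1 by simp
      also have "\<dots> = h^l * (nderiv {a..b} l p x \<bullet> u)"
        using compo_deriv[OF ab pC order_refl s1, of u] xs unfolding h_def by simp
      finally show ?thesis using h0 by (simp add: field_simps)
    qed
    have "norm (nderiv {a..b} l p x) \<le> (\<Sum>u\<in>Basis. \<bar>nderiv {a..b} l p x \<bullet> u\<bar>)" by (rule norm_le_l1)
    also have "\<dots> \<le> (\<Sum>u\<in>(Basis::'a set). G * (Kc * V) / h^l)"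
    proof (rule sum_mono)
      fix u :: 'a assume u: "u \<in> Basis"
      have "\<bar>nderiv {a..b} l p x \<bullet> u\<bar> = \<bar>poly ((pderiv ^^ l) (\<Sum>i\<le>r. monom (c u i) i)) s\<bar> / h^l"
        using comp[OF u] h0 by simp
      also have "\<dots> \<le> (\<Sum>i\<le>r. \<bar>c u i\<bar> * real i ^ l) / h^l"
        by (intro divide_right_mono poly_deriv_bound sabs) (use h0 in simp)
      also have "\<dots> \<le> (\<Sum>i\<le>r. ((\<Sum>\<rho>\<le>r. \<bar>B i \<rho>\<bar>) * (Kc * V)) * real i ^ l) / h^l"
        by (intro divide_right_mono sum_mono mult_right_mono cb u) (use h0 in auto)
      also have "\<dots> = G * (Kc * V) / h^l"
      proof -
        have "(\<Sum>i\<le>r. ((\<Sum>\<rho>\<le>r. \<bar>B i \<rho>\<bar>) * (Kc * V)) * real i ^ l) = G * (Kc * V)"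
          unfolding G_def sum_distrib_right by (intro sum.cong refl) (simp add: algebra_simps sum_distrib_left)
        then show ?thesis by simp
      qed
      finally show "\<bar>nderiv {a..b} l p x \<bullet> u\<bar> \<le> G * (Kc * V) / h^l" .
    qed
    also have "\<dots> = real DIM('a) * G * Kc * V / h^l" by simp
    finally show ?thesis .
  qed
  have "supn {a<..b} (nderiv {a..b} l p) \<le> real DIM('a) * G * Kc * V / h^l"
    by (rule supn_le) (use ab pt in auto)
  also have "real DIM('a) * G * Kc * V / h^l
      = (real DIM('a) * G * Kc) * (\<Sum>j\<le>K+1. h powi (int j - int l) * Sv j)"
  proof -
    have e: "V / h^l = (\<Sum>j\<le>K+1. h powi (int j - int l) * Sv j)"
      unfolding V_def sum_divide_distrib
      by (intro sum.cong refl) (use h0 in \<open>simp add: power_int_diff power_int_of_nat\<close>)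
    have "real DIM('a) * G * Kc * V / h^l = (real DIM('a) * G * Kc) * (V / h^l)"
      by (simp only: times_divide_eq_right)
    then show ?thesis unfolding e .
  qed
  finally show ?thesis unfolding p_def G_def Kc_def Sv_def h_def .
qed

theorem mainTheorem7:
  fixes r k kJs kI :: nat
    and Jh :: "(real \<Rightarrow> real) \<Rightarrow> real"
    and Ih :: "(real \<Rightarrow> real) \<Rightarrow> real \<Rightarrow> real"
  assumes "k \<le> r"
    and linJ: "\<forall>f g (\<alpha>::real) \<beta>. Ck_on kJs {-1..1} f \<and> Ck_on kJs {-1..1} g \<longrightarrow>
                 Jh (\<lambda>s. \<alpha> * f s + \<beta> * g s) = \<alpha> * Jh f + \<beta> * Jh g"
    and linI: "\<forall>f g (\<alpha>::real) \<beta>. Ck_on kI {-1..1} f \<and> Ck_on kI {-1..1} g \<longrightarrow>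
                 (\<forall>s\<in>{-1..1}. Ih (\<lambda>x. \<alpha> * f x + \<beta> * g x) s = \<alpha> * Ih f s + \<beta> * Ih g s)"
    and regI: "\<forall>l f. Ck_on (max kI l) {-1..1} f \<longrightarrow> Ck_on l {-1..1} (Ih f)"
    and A1: "A1 r k Jh"
    and A2: "\<exists>C0. \<forall>\<phi>::real \<Rightarrow> 'a::euclidean_space. Ck_on kJs {-1..1} \<phi> \<longrightarrow>
               norm (vecJ Jh \<phi>) \<le> C0 * (\<Sum>j\<le>kJs. supn {-1..1} (nderiv {-1..1} j \<phi>))"
    and A3: "\<exists>C1. \<forall>l\<le>kJs. \<forall>\<phi>::real \<Rightarrow> 'a. Ck_on (max kI l) {-1..1} \<phi> \<longrightarrow>
               supn {-1..1} (nderiv {-1..1} l (vecI Ih \<phi>))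
                 \<le> C1 * (\<Sum>j\<le>max kI l. supn {-1..1} (nderiv {-1..1} j \<phi>))"
  shows "\<forall>l\<le>r. \<exists>C. \<forall>(t::nat \<Rightarrow> real) N n (v::real \<Rightarrow> 'a).
           (\<forall>i<N. t i < t (Suc i)) \<and> (\<forall>i\<in>{1..N}. t i - t (i - 1) \<le> 1)
           \<and> 1 \<le> n \<and> n \<le> N
           \<and> Ck_on (max (k div 2 - 1) (max kJs kI) + 1) {t (n - 1)..t n} v
         \<longrightarrow> supn {t (n - 1)<..t n} (nderiv {t (n - 1)..t n} l (Jn r k Jh Ih (t (n - 1)) (t n) v))
             \<le> C * (\<Sum>j\<le>max (k div 2 - 1) (max kJs kI) + 1.
                     ((t n - t (n - 1)) / 2) powi (int j - int l)
                     * supn {t (n - 1)<..t n} (nderiv {t (n - 1)..t n} j v))"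
proof (intro allI impI)
  fix l :: nat assume l: "l \<le> r"
  have L: "linJp kJs Jh" using linJ unfolding linJp_def .
  have LI: "linIp kI Ih" using linI unfolding linIp_def .
  have R: "regIp kI Ih" using regI unfolding regIp_def .
  obtain C0 where C0: "0 \<le> C0"
    and JB: "\<forall>f. Ck_on kJs {-1..1} f \<longrightarrow> \<bar>Jh f\<bar> \<le> C0 * (\<Sum>j\<le>kJs. supn {-1..1} (nderiv {-1..1} j f))"
    using J_scalar[OF A2 L] by blast
  obtain C1 where C1: "0 \<le> C1"
    and IB: "\<forall>l\<le>kJs. \<forall>f. Ck_on (max kI l) {-1..1} f \<longrightarrow>
               supn {-1..1} (nderiv {-1..1} l (Ih f)) \<le> C1 * (\<Sum>j\<le>max kI l. supn {-1..1} (nderiv {-1..1} j f))"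
    using I_scalar[OF A3 LI R] by blast
  obtain B where B: "\<forall>y. (\<forall>\<rho>\<le>r. Lrow k Jh \<rho> (\<Sum>i\<le>r. monom (\<Sum>l\<le>r. B i l * y l) i) = y \<rho>)
          \<and> (\<forall>Q. degree Q \<le> r \<and> (\<forall>\<rho>\<le>r. Lrow k Jh \<rho> Q = y \<rho>) \<longrightarrow> (\<forall>i\<le>r. coeff Q i = (\<Sum>l\<le>r. B i l * y l)))"
    using solve[OF \<open>k \<le> r\<close> A1 LinP_of[OF L]] by blast
  define K where "K = max (k div 2 - 1) (max kJs kI)"
  have KK: "max kI kJs \<le> K" and Kk: "k div 2 \<le> K + 1" unfolding K_def by auto
  show "\<exists>C. \<forall>(t::nat \<Rightarrow> real) N n (v::real \<Rightarrow> 'a).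
           (\<forall>i<N. t i < t (Suc i)) \<and> (\<forall>i\<in>{1..N}. t i - t (i - 1) \<le> 1)
           \<and> 1 \<le> n \<and> n \<le> N
           \<and> Ck_on (max (k div 2 - 1) (max kJs kI) + 1) {t (n - 1)..t n} v
         \<longrightarrow> supn {t (n - 1)<..t n} (nderiv {t (n - 1)..t n} l (Jn r k Jh Ih (t (n - 1)) (t n) v))
             \<le> C * (\<Sum>j\<le>max (k div 2 - 1) (max kJs kI) + 1.
                     ((t n - t (n - 1)) / 2) powi (int j - int l)
                     * supn {t (n - 1)<..t n} (nderiv {t (n - 1)..t n} j v))"
  proof (intro exI[of _ "real DIM('a) * (\<Sum>i\<le>r. real i ^ l * (\<Sum>\<rho>\<le>r. \<bar>B i \<rho>\<bar>)) * (C0 * real (kJs+1)^(r+2) * C1 + 1)"] allI impI)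
    fix t :: "nat \<Rightarrow> real" and N n and v :: "real \<Rightarrow> 'a"
    assume H: "(\<forall>i<N. t i < t (Suc i)) \<and> (\<forall>i\<in>{1..N}. t i - t (i - 1) \<le> 1)
           \<and> 1 \<le> n \<and> n \<le> N
           \<and> Ck_on (max (k div 2 - 1) (max kJs kI) + 1) {t (n - 1)..t n} v"
    have n1: "n - 1 < N" "Suc (n - 1) = n" using H by auto
    then have ab: "t (n - 1) < t n" using H by metis
    have vC: "Ck_on (K+1) {t (n - 1)..t n} v" using H unfolding K_def by blast
    show "supn {t (n - 1)<..t n} (nderiv {t (n - 1)..t n} l (Jn r k Jh Ih (t (n - 1)) (t n) v))
             \<le> real DIM('a) * (\<Sum>i\<le>r. real i ^ l * (\<Sum>\<rho>\<le>r. \<bar>B i \<rho>\<bar>)) * (C0 * real (kJs+1)^(r+2) * C1 + 1)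
              * (\<Sum>j\<le>max (k div 2 - 1) (max kJs kI) + 1.
                     ((t n - t (n - 1)) / 2) powi (int j - int l)
                     * supn {t (n - 1)<..t n} (nderiv {t (n - 1)..t n} j v))"
      using final_bound[OF ab \<open>k \<le> r\<close> vC KK Kk l L JB C0 IB C1 LI R B] unfolding K_def .
  qed
qed

end
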